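(* Consider the inviscid Hou–Li model $$u_t+2\psi u_z=2u\psi_z,\qquad \omega_t+2\psi\omega_z=(u^2)_z,\qquad -\psi_{zz}=\omega,$$ for $2\pi$-periodic functions of $z$. There exists a constant $\delta_0>0$ such that for every $\alpha\in(1-\delta_0,1)$ the model develops a finite-time singularity from some $C^\alpha$ initial data. Moreover, there exist $C^\alpha$, $2\pi$-periodic functions $(\omega_\infty,u_\infty,\psi_\infty)$ with $-\psi_\infty''=\omega_\infty$ and a constant $c_{u,\infty}<0$ such that $(\omega,u,\psi)(x,t)=(1+c_{u,\infty}t)^{-1}(\omega_\infty,u_\infty,\psi_\infty)(x)$ is a self-similar solution blowing up at $T=-1/c_{u,\infty}$ (neither expanding nor focusing).
   Context: The unknowns $u,\omega,\psi$ are odd and $2\pi$-periodic in $z$, and $\psi$ is the unique odd $2\pi$-periodic solution of $-\psi_{zz}=\omega$. $C^\alpha$ denotes the Hölder space of exponent $\alpha$. *)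

theory Defs
  imports "HOL-Analysis.Analysis"
begin

text \<open>Hoelder continuity of exponent alpha (global, on the real line; for 2pi-periodic
  functions this is the usual C^alpha seminorm condition; boundedness follows from
  continuity and periodicity).\<close>
definition holder :: "real \<Rightarrow> (real \<Rightarrow> real) \<Rightarrow> bool" where
  "holder \<alpha> f \<longleftrightarrow> (\<exists>M. \<forall>x y. \<bar>f x - f y\<bar> \<le> M * \<bar>x - y\<bar> powr \<alpha>)"

definition periodic2pi :: "(real \<Rightarrow> real) \<Rightarrow> bool" where
  "periodic2pi f \<longleftrightarrow> (\<forall>x. f (x + 2 * pi) = f x)"

definition odd_fun :: "(real \<Rightarrow> real) \<Rightarrow> bool" where
  "odd_fun f \<longleftrightarrow> (\<forall>x. f (- x) = - f x)"

definition stream_fun :: "(real \<Rightarrow> real) \<Rightarrow> (real \<Rightarrow> real) \<Rightarrow> bool" where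
  "stream_fun \<psi> \<omega> \<longleftrightarrow>
     (\<forall>z. \<psi> differentiable (at z)) \<and>
     (\<forall>z. (deriv \<psi> has_real_derivative - \<omega> z) (at z))"

definition test_fun :: "(real \<Rightarrow> real) \<Rightarrow> (real \<Rightarrow> real) \<Rightarrow> bool" where
  "test_fun \<phi> d\<phi> \<longleftrightarrow> periodic2pi \<phi> \<and> continuous_on UNIV d\<phi> \<and>
     (\<forall>x. (\<phi> has_real_derivative d\<phi> x) (at x))"

text \<open>Weak (distributional in z, classical in t) solution of the inviscid Hou--Li model
    u_t + 2 psi u_z = 2 u psi_z,  omega_t + 2 psi omega_z = (u^2)_z,  -psi_zz = omega
  on [0,T), for odd 2pi-periodic u, omega, psi (functions of (z,t)).
  Using 2 psi u_z - 2 u psi_z = 2 (psi u)_z - 4 u psi_z and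
  2 psi omega_z = 2 (psi omega)_z - 2 psi_z omega, the weak form against a periodic test
  function phi reads
    d/dt int u phi = int (2 psi u phi' + 4 u psi_z phi),
    d/dt int omega phi = int (2 psi omega phi' + 2 psi_z omega phi - u^2 phi').\<close>
definition weak_sol_HL ::
  "real \<Rightarrow> (real \<Rightarrow> real \<Rightarrow> real) \<Rightarrow> (real \<Rightarrow> real \<Rightarrow> real) \<Rightarrow> (real \<Rightarrow> real \<Rightarrow> real) \<Rightarrow> bool"
where
  "weak_sol_HL T \<omega> u \<psi> \<longleftrightarrow>
    (\<forall>t\<in>{0..<T}.
        continuous_on UNIV (\<lambda>z. u z t) \<and> continuous_on UNIV (\<lambda>z. \<omega> z t) \<and>
        periodic2pi (\<lambda>z. u z t) \<and> periodic2pi (\<lambda>z. \<omega> z t) \<and> periodic2pi (\<lambda>z. \<psi> z t) \<and>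
        odd_fun (\<lambda>z. u z t) \<and> odd_fun (\<lambda>z. \<omega> z t) \<and> odd_fun (\<lambda>z. \<psi> z t) \<and>
        stream_fun (\<lambda>z. \<psi> z t) (\<lambda>z. \<omega> z t)) \<and>
    (\<forall>\<phi> d\<phi>. test_fun \<phi> d\<phi> \<longrightarrow>
       continuous_on {0..<T} (\<lambda>t. integral {0..2*pi} (\<lambda>z. u z t * \<phi> z)) \<and>
       continuous_on {0..<T} (\<lambda>t. integral {0..2*pi} (\<lambda>z. \<omega> z t * \<phi> z)) \<and>
       (\<forall>t\<in>{0<..<T}.
          ((\<lambda>s. integral {0..2*pi} (\<lambda>z. u z s * \<phi> z)) has_real_derivative
             integral {0..2*pi} (\<lambda>z. 2 * \<psi> z t * u z t * d\<phi> z
                                   + 4 * u z t * deriv (\<lambda>y. \<psi> y t) z * \<phi> z)) (at t) \<and>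
          ((\<lambda>s. integral {0..2*pi} (\<lambda>z. \<omega> z s * \<phi> z)) has_real_derivative
             integral {0..2*pi} (\<lambda>z. 2 * \<psi> z t * \<omega> z t * d\<phi> z
                                   + 2 * deriv (\<lambda>y. \<psi> y t) z * \<omega> z t * \<phi> z
                                   - (u z t)\<^sup>2 * d\<phi> z)) (at t)))"

end

theory Submission
  imports Defs
begin


definition red :: "real \<Rightarrow> real" where "red z = z - 2*pi * of_int \<lfloor>z/(2*pi)\<rfloor>"
definition rr :: "real \<Rightarrow> real" where "rr z = (if red z \<le> pi then red z else 2*pi - red z)"
definition sg :: "real \<Rightarrow> real" where "sg z = (if red z \<le> pi then 1 else -1)"
definition oddext :: "(real \<Rightarrow> real) \<Rightarrow> real \<Rightarrow> real" where "oddext f z = sg z * f (rr z)"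
definition evenext :: "(real \<Rightarrow> real) \<Rightarrow> real \<Rightarrow> real" where "evenext f z = f (rr z)"

lemma red_bounds: "0 \<le> red z" "red z < 2*pi"
proof -
  have p: "2*pi > 0" by simp
  have "of_int \<lfloor>z/(2*pi)\<rfloor> \<le> z/(2*pi)" by (rule of_int_floor_le)
  hence "2*pi * of_int \<lfloor>z/(2*pi)\<rfloor> \<le> 2*pi*(z/(2*pi))" by (rule mult_left_mono) (use p in auto)
  thus "0 \<le> red z" unfolding red_def by simp
  have "z/(2*pi) < of_int \<lfloor>z/(2*pi)\<rfloor> + 1" by (rule real_of_int_floor_add_one_gt)
  hence "z < 2*pi*(of_int \<lfloor>z/(2*pi)\<rfloor> + 1)" using p by (simp add: field_simps)
  thus "red z < 2*pi" unfolding red_def by (simp add: algebra_simps)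
qed

lemma red_eq: assumes "0 \<le> z - 2*pi * of_int k" "z - 2*pi * of_int k < 2*pi" shows "red z = z - 2*pi * of_int k"
proof -
  have p: "2*pi > 0" by simp
  have "\<lfloor>z/(2*pi)\<rfloor> = k"
  proof (rule floor_unique)
    show "of_int k \<le> z/(2*pi)" using assms(1) p by (simp add: field_simps)
    show "z/(2*pi) < of_int k + 1" using assms(2) p by (simp add: field_simps)
  qed
  thus ?thesis unfolding red_def by simp
qed

lemma red_id: "0 \<le> z \<Longrightarrow> z < 2*pi \<Longrightarrow> red z = z"
  using red_eq[of z 0] by simp

lemma red_periodic: "red (z + 2*pi) = red z"
proof -
  have "red (z + 2*pi) = (z + 2*pi) - 2*pi * of_int (\<lfloor>z/(2*pi)\<rfloor> + 1)"
    by (rule red_eq) (use red_bounds[of z] in \<open>auto simp: red_def algebra_simps\<close>)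
  thus ?thesis by (simp add: red_def algebra_simps)
qed

lemma rr_periodic: "rr (z + 2*pi) = rr z" and sg_periodic: "sg (z + 2*pi) = sg z"
  unfolding rr_def sg_def red_periodic by auto

lemma periodic_int:
  assumes "\<And>x. F (x + 2*pi) = F x"
  shows "F (x + 2*pi * of_int k) = F x"
proof -
  have pos: "F (y + 2*pi*real n) = F y" for y n
  proof (induction n)
    case 0 thus ?case by simp
  next
    case (Suc n)
    have "F (y + 2*pi*real (Suc n)) = F ((y + 2*pi*real n) + 2*pi)" by (simp add: algebra_simps)
    also have "\<dots> = F (y + 2*pi*real n)" by (rule assms)
    finally show ?case using Suc by simp
  qed
  show ?thesis
  proof (cases "k \<ge> 0")
    case True
    then obtain n where "k = int n" by (metis nonneg_eq_int)
    thus ?thesis using pos by simp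
  next
    case False
    define n where "n = nat (-k)"
    have "k = - int n" using False unfolding n_def by simp
    thus ?thesis using pos[of "x - 2*pi*real n" n] by simp
  qed
qed

lemma red_shift: "\<exists>k::int. red x = x - 2*pi * of_int k"
  unfolding red_def by auto

lemma rr_sg_nonneg: "0 \<le> z \<Longrightarrow> z \<le> pi \<Longrightarrow> rr z = z \<and> sg z = 1"
  using red_id[of z] pi_gt_zero unfolding rr_def sg_def by auto

lemma rr_sg_neg: "-pi \<le> z \<Longrightarrow> z < 0 \<Longrightarrow> rr z = -z \<and> (z = -pi \<or> sg z = -1)"
proof -
  assume a: "-pi \<le> z" "z < 0"
  have "red z = z - 2*pi * of_int (-1::int)"
    by (rule red_eq) (use a in auto)
  thus ?thesis unfolding rr_def sg_def using a by auto
qed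

lemma rr_bounds: "0 \<le> rr z" "rr z \<le> pi"
  using red_bounds[of z] unfolding rr_def by auto

lemma sg_abs: "\<bar>sg z\<bar> = 1" unfolding sg_def by auto

lemma sg_sq: "sg z * sg z = 1" unfolding sg_def by auto

lemma rr_abs: "-pi \<le> z \<Longrightarrow> z \<le> pi \<Longrightarrow> rr z = \<bar>z\<bar>"
  using rr_sg_nonneg rr_sg_neg by (cases "z \<ge> 0") auto

lemma oddext_expl: assumes "f pi = 0" "-pi \<le> z" "z \<le> pi"
  shows "oddext f z = (if 0 \<le> z then f z else - f (-z))"
  using rr_sg_nonneg[of z] rr_sg_neg[of z] assms unfolding oddext_def by auto

lemma reduce_ex: "\<exists>k::int. -pi \<le> x - 2*pi * of_int k \<and> x - 2*pi * of_int k < pi"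
proof -
  define k where "k = \<lfloor>(x+pi)/(2*pi)\<rfloor>"
  have p: "2*pi > 0" by simp
  have "of_int k \<le> (x+pi)/(2*pi)" "(x+pi)/(2*pi) < of_int k + 1" unfolding k_def by linarith+
  hence "2*pi * of_int k \<le> x + pi" "x + pi < 2*pi*(of_int k + 1)" using p by (simp_all add: field_simps)
  thus ?thesis by (intro exI[of _ k]) (auto simp: algebra_simps)
qed

lemma rr_lip: "\<bar>rr x - rr y\<bar> \<le> \<bar>x - y\<bar>"
proof -
  obtain k where k: "-pi \<le> x - 2*pi * of_int k" "x - 2*pi * of_int k < pi" using reduce_ex by blast
  define x' where "x' = x - 2*pi * of_int k"
  define y' where "y' = y - 2*pi * of_int k"
  have rx: "rr x = rr x'" using periodic_int[of rr x' k, OF rr_periodic] by (simp add: x'_def)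
  have ry: "rr y = rr y'" using periodic_int[of rr y' k, OF rr_periodic] by (simp add: y'_def)
  have d: "x - y = x' - y'" by (simp add: x'_def y'_def)
  show ?thesis
  proof (cases "\<bar>x' - y'\<bar> \<ge> pi")
    case True thus ?thesis using rr_bounds[of x] rr_bounds[of y] d by auto
  next
    case False
    have xa: "rr x' = \<bar>x'\<bar>" using rr_abs k x'_def by simp
    consider "-pi \<le> y' \<and> y' \<le> pi" | "y' > pi" | "y' < -pi" by linarith
    thus ?thesis
    proof cases
      case 1 thus ?thesis using rx ry xa rr_abs[of y'] d by auto
    next
      case 2
      have "rr y' = rr (y' - 2*pi)" using rr_periodic[of "y' - 2*pi"] by simp
      also have "\<dots> = 2*pi - y'" using rr_abs[of "y' - 2*pi"] 2 False k x'_def by auto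
      finally show ?thesis using rx ry xa d 2 False k x'_def by auto
    next
      case 3
      have "rr y' = rr (y' + 2*pi)" using rr_periodic[of "y'"] by simp
      also have "\<dots> = y' + 2*pi" using rr_abs[of "y' + 2*pi"] 3 False k x'_def by auto
      finally show ?thesis using rx ry xa d 3 False k x'_def by auto
    qed
  qed
qed

lemma rr_cont: "continuous_on UNIV rr"
  unfolding continuous_on_def
proof
  fix x :: real
  show "(rr \<longlongrightarrow> rr x) (at x within UNIV)"
    unfolding tendsto_iff dist_real_def
  proof (intro allI impI)
    fix e :: real assume e: "e > 0"
    show "\<forall>\<^sub>F y in at x within UNIV. \<bar>rr y - rr x\<bar> < e"
      unfolding eventually_at dist_real_def
      by (rule exI[of _ e]) (use e rr_lip in \<open>auto intro: le_less_trans\<close>)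
  qed
qed

lemma oddext_periodic: "oddext f (z + 2*pi) = oddext f z"
  and evenext_periodic: "evenext f (z + 2*pi) = evenext f z"
  unfolding oddext_def evenext_def rr_periodic sg_periodic by auto

lemma oddext_odd: assumes "f 0 = 0" "f pi = 0" shows "oddext f (-z) = - oddext f z"
proof -
  obtain k where k: "-pi \<le> z - 2*pi * of_int k" "z - 2*pi * of_int k < pi" using reduce_ex by blast
  define z' where "z' = z - 2*pi * of_int k"
  have "oddext f z = oddext f (z' + 2*pi * of_int k)" by (simp add: z'_def)
  also have "\<dots> = oddext f z'" by (rule periodic_int) (rule oddext_periodic)
  finally have a: "oddext f z = oddext f z'" .
  have "oddext f (-z) = oddext f (-z' + 2*pi * of_int (-k))" by (simp add: z'_def)
  also have "\<dots> = oddext f (-z')" by (rule periodic_int) (rule oddext_periodic)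
  finally have b: "oddext f (-z) = oddext f (-z')" .
  show ?thesis unfolding a b using oddext_expl[of f z', OF assms(2)] oddext_expl[of f "-z'", OF assms(2)] k z'_def assms(1)
    by (cases "z' = 0") auto
qed

lemma evenext_cont: "continuous_on {0..pi} f \<Longrightarrow> continuous_on UNIV (evenext f)"
  unfolding evenext_def
  by (rule continuous_on_compose2[OF _ rr_cont]) (use rr_bounds in auto)

lemma shift_isCont:
  fixes F :: "real \<Rightarrow> real"
  assumes "\<And>z. F (z + c) = F z" "isCont F (x + c)"
  shows "isCont F x"
proof -
  have i: "isCont (\<lambda>z. z + c) x" by (intro continuous_intros)
  have "isCont (F \<circ> (\<lambda>z. z + c)) x" using continuous_at_compose[OF i, of F] assms(2) by simp
  hence "isCont (\<lambda>z. F (z + c)) x" by (simp add: o_def)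
  thus ?thesis using assms(1) by simp
qed

lemma shift_deriv:
  assumes "\<And>z. F (z + c) = F z" "(F has_real_derivative D) (at (x + c))"
  shows "(F has_real_derivative D) (at x)"
  using assms(2) unfolding DERIV_shift assms(1) .

lemma sg_local:
  assumes "0 < y" "y < pi" shows "\<forall>\<^sub>F z in nhds y. sg z = 1 \<and> rr z = z"
proof -
  have "\<forall>\<^sub>F z in nhds y. z \<in> {0<..<pi}" by (rule eventually_nhds_in_open) (use assms in auto)
  thus ?thesis by eventually_elim (use rr_sg_nonneg in auto)
qed

lemma sg_local2:
  assumes "pi < y" "y < 2*pi" shows "\<forall>\<^sub>F z in nhds y. sg z = -1 \<and> rr z = 2*pi - z"
proof -
  have "\<forall>\<^sub>F z in nhds y. z \<in> {pi<..<2*pi}" by (rule eventually_nhds_in_open) (use assms in auto)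
  thus ?thesis by eventually_elim (auto simp: sg_def rr_def red_id)
qed

lemma oddext_cont:
  assumes c: "continuous_on {0..pi} f" and f0: "f 0 = 0" and fpi: "f pi = 0"
  shows "continuous_on UNIV (oddext f)"
proof -
  have ce: "isCont (evenext f) z" for z
    using evenext_cont[OF c] by (simp add: continuous_on_eq_continuous_at)
  have main: "isCont (oddext f) y" if y: "0 \<le> y" "y < 2*pi" for y
  proof (cases "y = 0 \<or> y = pi")
    case True
    hence "rr y = 0 \<or> rr y = pi" using rr_sg_nonneg[of y] by auto
    hence z: "f (rr y) = 0" using f0 fpi by auto
    hence o0: "oddext f y = 0" unfolding oddext_def by simp
    have "((\<lambda>z. \<bar>evenext f z\<bar>) \<longlongrightarrow> \<bar>evenext f y\<bar>) (at y)"
      using ce[of y] by (intro tendsto_rabs) (simp add: isCont_def)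
    hence "((\<lambda>z. \<bar>oddext f z\<bar>) \<longlongrightarrow> 0) (at y)"
      using z unfolding evenext_def oddext_def abs_mult by (simp add: sg_abs)
    thus ?thesis unfolding isCont_def o0 tendsto_rabs_zero_iff .
  next
    case False
    hence "(0 < y \<and> y < pi) \<or> (pi < y \<and> y < 2*pi)" using y by auto
    then obtain s where "\<forall>\<^sub>F z in nhds y. oddext f z = s * evenext f z"
    proof
      assume "0 < y \<and> y < pi"
      hence "\<forall>\<^sub>F z in nhds y. oddext f z = 1 * evenext f z"
        using sg_local[of y] by (auto simp: oddext_def evenext_def elim!: eventually_mono)
      thus ?thesis using that by blast
    next
      assume "pi < y \<and> y < 2*pi"
      hence "\<forall>\<^sub>F z in nhds y. oddext f z = (-1) * evenext f z"
        using sg_local2[of y] by (auto simp: oddext_def evenext_def elim!: eventually_mono)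
      thus ?thesis using that by blast
    qed
    moreover have "isCont (\<lambda>z. s * evenext f z) y" using ce by (intro continuous_intros)
    ultimately show ?thesis using isCont_cong[of "oddext f" "\<lambda>z. s * evenext f z" y] by simp
  qed
  show ?thesis unfolding continuous_on_eq_continuous_at[OF open_UNIV]
  proof
    fix x :: real assume "x \<in> UNIV"
    obtain k where k: "red x = x - 2*pi * of_int k" using red_shift by blast
    have "isCont (oddext f) (x + (- 2*pi * of_int k))"
      using main[of "red x"] red_bounds[of x] k by simp
    have per: "oddext f (z + (- 2*pi * of_int k)) = oddext f z" for z
      using periodic_int[of "oddext f" z "-k", OF oddext_periodic] by simp
    show "isCont (oddext f) x"
      by (rule shift_isCont[of "oddext f" "- 2*pi * of_int k", OF per]) fact
  qed
qed

lemma ext_deriv_nonseam: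
  assumes d: "\<And>x. 0 < x \<Longrightarrow> x < pi \<Longrightarrow> (f has_real_derivative f' x) (at x)"
    and nz: "red x \<noteq> 0" "red x \<noteq> pi"
  shows "(oddext f has_real_derivative evenext f' x) (at x) \<and> (evenext f has_real_derivative oddext f' x) (at x)"
proof -
  obtain k where k: "red x = x - 2*pi * of_int k" using red_shift by blast
  define y where "y = red x"
  have y: "0 < y" "y < 2*pi" "y \<noteq> pi" using red_bounds[of x] nz unfolding y_def by auto
  have ry: "red y = y" using y red_id by simp
  have at_y: "(oddext f has_real_derivative evenext f' y) (at y) \<and> (evenext f has_real_derivative oddext f' y) (at y)"
  proof (cases "y < pi")
    case True
    have e1: "oddext f z = f z" "evenext f z = f z" if "z \<in> {0<..<pi}" for z
      using rr_sg_nonneg[of z] that unfolding oddext_def evenext_def by auto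
    have e2: "evenext f' y = f' y" "oddext f' y = f' y"
      using rr_sg_nonneg[of y] y True unfolding oddext_def evenext_def by auto
    show ?thesis unfolding e2
      using has_field_derivative_transform_within_open[OF d[of y], of "{0<..<pi}"] e1 y True by auto
  next
    case False
    hence yy: "pi < y" using y by auto
    have e1: "oddext f z = - f (2*pi - z)" "evenext f z = f (2*pi - z)" if "z \<in> {pi<..<2*pi}" for z
      using that unfolding oddext_def evenext_def rr_def sg_def by (auto simp: red_id)
    have e2: "evenext f' y = f' (2*pi - y)" "oddext f' y = - f' (2*pi - y)"
      using yy ry unfolding oddext_def evenext_def rr_def sg_def by auto
    have dd: "((\<lambda>z. f (2*pi - z)) has_real_derivative f' (2*pi - y) * (-1)) (at y)"
      by (rule DERIV_chain2[OF d]) (use y yy in \<open>auto intro!: derivative_eq_intros\<close>)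
    have dd2: "((\<lambda>z. - f (2*pi - z)) has_real_derivative - (f' (2*pi - y) * (-1))) (at y)"
      by (rule DERIV_minus[OF dd])
    show ?thesis unfolding e2
      using has_field_derivative_transform_within_open[OF dd, of "{pi<..<2*pi}" "evenext f"]
        has_field_derivative_transform_within_open[OF dd2, of "{pi<..<2*pi}" "oddext f"] e1 y yy by auto
  qed
  have per1: "oddext f (z + (- 2*pi * of_int k)) = oddext f z" for z
    using periodic_int[of "oddext f" z "-k", OF oddext_periodic] by simp
  have per2: "evenext f (z + (- 2*pi * of_int k)) = evenext f z" for z
    using periodic_int[of "evenext f" z "-k", OF evenext_periodic] by simp
  have per3: "evenext f' y = evenext f' x"
    using periodic_int[of "evenext f'" y "k", OF evenext_periodic] unfolding y_def k by simp
  have per4: "oddext f' y = oddext f' x"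
    using periodic_int[of "oddext f'" y "k", OF oddext_periodic] unfolding y_def k by simp
  have yx: "y = x + (- 2*pi * of_int k)" using k y_def by simp
  have A1: "(oddext f has_real_derivative evenext f' x) (at (x + (- 2*pi * of_int k)))"
    using at_y per3 yx by metis
  have A2: "(evenext f has_real_derivative oddext f' x) (at (x + (- 2*pi * of_int k)))"
    using at_y per4 yx by metis
  show ?thesis
    using shift_deriv[of "oddext f" "- 2*pi * of_int k", OF per1 A1] shift_deriv[of "evenext f" "- 2*pi * of_int k", OF per2 A2]
    by auto
qed

lemma GL:
  fixes F G :: "real \<Rightarrow> real"
  assumes cF: "continuous_on UNIV F" and cG: "continuous_on UNIV G"
    and d: "\<And>x. x \<notin> E \<Longrightarrow> (F has_real_derivative G x) (at x)"
    and fin: "\<And>a b. finite (E \<inter> {a..b})"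
  shows "(F has_real_derivative G x) (at x)"
proof -
  define a where "a = x - 1"
  define b where "b = x + 1"
  have eq: "F y = F a + integral {a..y} G" if "y \<in> {a<..<b}" for y
  proof -
    have "(G has_integral (F y - F a)) {a..y}"
    proof (rule fundamental_theorem_of_calculus_interior_strong[OF fin[of a b]])
      show "a \<le> y" using that by auto
      show "continuous_on {a..y} F" using cF by (rule continuous_on_subset) auto
      fix t assume "t \<in> {a<..<y} - E \<inter> {a..b}"
      hence "t \<notin> E" using that by auto
      thus "(F has_vector_derivative G t) (at t)" using d has_real_derivative_iff_has_vector_derivative by blast
    qed
    thus ?thesis by (simp add: integral_unique)
  qed
  have cGab: "continuous_on {a..b} G" using cG by (rule continuous_on_subset) auto
  have "((\<lambda>y. integral {a..y} G) has_real_derivative G x) (at x within {a..b})"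
    by (rule integral_has_real_derivative[OF cGab]) (auto simp: a_def b_def)
  hence "((\<lambda>y. integral {a..y} G) has_real_derivative G x) (at x)"
    using at_within_interior[of x "{a..b}"] by (auto simp: a_def b_def)
  hence "((\<lambda>y. F a + integral {a..y} G) has_real_derivative G x) (at x)"
    using DERIV_add[OF DERIV_const] by fastforce
  thus ?thesis
    by (rule has_field_derivative_transform_within_open[of _ _ _ "{a<..<b}"]) (use eq in \<open>auto simp: a_def b_def\<close>)
qed

definition seams :: "real set" where "seams = {x. red x = 0 \<or> red x = pi}"

lemma seams_fin: "finite (seams \<inter> {a..b})"
proof -
  have "seams \<inter> {a..b} \<subseteq> (\<lambda>j::int. of_int j * pi) ` {\<lceil>a/pi\<rceil>..\<lfloor>b/pi\<rfloor>}"
  proof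
    fix x assume x: "x \<in> seams \<inter> {a..b}"
    obtain k where k: "red x = x - 2*pi * of_int k" using red_shift by blast
    obtain j :: int where j: "x = of_int j * pi"
    proof (cases "red x = 0")
      case True thus ?thesis using that[of "2*k"] k by (auto simp: algebra_simps)
    next
      case False hence "red x = pi" using x seams_def by auto
      thus ?thesis using that[of "2*k+1"] k by (auto simp: algebra_simps)
    qed
    have "a/pi \<le> of_int j" "of_int j \<le> b/pi" using x j by (auto simp: field_simps)
    hence "\<lceil>a/pi\<rceil> \<le> j" "j \<le> \<lfloor>b/pi\<rfloor>" by (simp_all add: ceiling_le_iff le_floor_iff)
    thus "x \<in> (\<lambda>j::int. of_int j * pi) ` {\<lceil>a/pi\<rceil>..\<lfloor>b/pi\<rfloor>}" using j by auto
  qed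
  thus ?thesis by (rule finite_subset) auto
qed

lemma oddext_deriv:
  assumes c: "continuous_on {0..pi} f" and f0: "f 0 = 0" and fpi: "f pi = 0"
    and d: "\<And>x. 0 < x \<Longrightarrow> x < pi \<Longrightarrow> (f has_real_derivative f' x) (at x)"
    and c': "continuous_on {0..pi} f'"
  shows "(oddext f has_real_derivative evenext f' x) (at x)"
proof (rule GL[of _ _ seams])
  show "continuous_on UNIV (oddext f)" by (rule oddext_cont[OF c f0 fpi])
  show "continuous_on UNIV (evenext f')" by (rule evenext_cont[OF c'])
  show "finite (seams \<inter> {a..b})" for a b by (rule seams_fin)
  fix y assume "y \<notin> seams"
  thus "(oddext f has_real_derivative evenext f' y) (at y)"
    using ext_deriv_nonseam[OF d] unfolding seams_def by blast
qed

lemma evenext_deriv: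
  assumes c: "continuous_on {0..pi} f"
    and d: "\<And>x. 0 < x \<Longrightarrow> x < pi \<Longrightarrow> (f has_real_derivative f' x) (at x)"
    and c': "continuous_on {0..pi} f'" and f0: "f' 0 = 0" and fpi: "f' pi = 0"
  shows "(evenext f has_real_derivative oddext f' x) (at x)"
proof (rule GL[of _ _ seams])
  show "continuous_on UNIV (evenext f)" by (rule evenext_cont[OF c])
  show "continuous_on UNIV (oddext f')" by (rule oddext_cont[OF c' f0 fpi])
  show "finite (seams \<inter> {a..b})" for a b by (rule seams_fin)
  fix y assume "y \<notin> seams"
  thus "(evenext f has_real_derivative oddext f' y) (at y)"
    using ext_deriv_nonseam[OF d] unfolding seams_def by blast
qed

lemma powr_subadd:
  fixes a b al :: real
  assumes a: "0 \<le> a" and b: "0 \<le> b" and al: "0 < al" "al \<le> 1"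
  shows "(a + b) powr al \<le> a powr al + b powr al"
proof (cases "a + b = 0")
  case True thus ?thesis using a b by auto
next
  case False
  hence s: "a + b > 0" using a b by auto
  have t1: "a/(a+b) \<le> (a/(a+b)) powr al"
  proof (cases "a = 0")
    case True thus ?thesis by simp
  next
    case False
    hence "a/(a+b) > 0" using a s by auto
    moreover have "a/(a+b) \<le> 1" using a b s by auto
    ultimately have "(a/(a+b)) powr 1 \<le> (a/(a+b)) powr al" "(a/(a+b)) powr 1 = a/(a+b)"
      using powr_mono'[of al 1 "a/(a+b)"] al a s by auto
    thus ?thesis by simp
  qed
  have t2: "b/(a+b) \<le> (b/(a+b)) powr al"
  proof (cases "b = 0")
    case True thus ?thesis by simp
  next
    case False
    hence "b/(a+b) > 0" using b s by auto
    moreover have "b/(a+b) \<le> 1" using a b s by auto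
    ultimately have "(b/(a+b)) powr 1 \<le> (b/(a+b)) powr al" "(b/(a+b)) powr 1 = b/(a+b)"
      using powr_mono'[of al 1 "b/(a+b)"] al b s by auto
    thus ?thesis by simp
  qed
  have "1 = (a+b)/(a+b)" using s by simp
  also have "\<dots> = a/(a+b) + b/(a+b)" by (rule add_divide_distrib)
  also have "\<dots> \<le> (a/(a+b)) powr al + (b/(a+b)) powr al" using t1 t2 by simp
  also have "\<dots> = (a powr al + b powr al) / (a+b) powr al"
    using a b s by (simp add: powr_divide add_divide_distrib)
  finally show ?thesis using s by (simp add: field_simps)
qed

lemma powr_diff_le:
  fixes x y al :: real
  assumes "0 \<le> x" "x \<le> y" "0 < al" "al \<le> 1"
  shows "y powr al - x powr al \<le> (y - x) powr al"
  using powr_subadd[of x "y - x" al] assms by simp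

lemma holder_deriv_bound:
  fixes f f' :: "real \<Rightarrow> real"
  assumes c: "continuous_on {0..pi} f"
    and d: "\<And>z. 0 < z \<Longrightarrow> z < pi \<Longrightarrow> (f has_real_derivative f' z) (at z)"
    and bd: "\<And>z. 0 < z \<Longrightarrow> z < pi \<Longrightarrow> \<bar>f' z\<bar> \<le> C * z powr (al - 1)"
    and al: "0 < al" "al \<le> 1"
    and xy: "0 \<le> x" "x \<le> y" "y \<le> pi"
  shows "\<bar>f y - f x\<bar> \<le> (C / al) * (y - x) powr al"
proof -
  have cp: "continuous_on {x..y} (\<lambda>z. z powr al)"
    by (rule continuous_on_powr') (use xy al in \<open>auto intro!: continuous_intros\<close>)
  have cf: "continuous_on {x..y} f" using c by (rule continuous_on_subset) (use xy in auto)
  have dp: "((\<lambda>z. (C/al) * z powr al) has_real_derivative C * z powr (al - 1)) (at z)" if "0 < z" for z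
  proof -
    have "((\<lambda>z. z powr al) has_real_derivative al * z powr (al - 1)) (at z)"
      by (rule has_real_derivative_powr) (rule that)
    from DERIV_cmult[OF this, where c="C/al"] show ?thesis using al by simp
  qed
  have "(C/al) * x powr al - f x \<le> (C/al) * y powr al - f y"
  proof (rule DERIV_nonneg_imp_increasing_open[OF xy(2)])
    fix z assume z: "x < z" "z < y"
    show "\<exists>D. ((\<lambda>z. (C/al) * z powr al - f z) has_real_derivative D) (at z) \<and> 0 \<le> D"
      using DERIV_diff[OF dp[of z] d[of z]] bd[of z] z xy by (intro exI) auto
  next
    show "continuous_on {x..y} (\<lambda>z. (C/al) * z powr al - f z)"
      by (rule continuous_on_diff[OF continuous_on_mult[OF continuous_on_const cp] cf])
  qed
  moreover have "(C/al) * x powr al + f x \<le> (C/al) * y powr al + f y"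
  proof (rule DERIV_nonneg_imp_increasing_open[OF xy(2)])
    fix z assume z: "x < z" "z < y"
    show "\<exists>D. ((\<lambda>z. (C/al) * z powr al + f z) has_real_derivative D) (at z) \<and> 0 \<le> D"
      using DERIV_add[OF dp[of z] d[of z]] bd[of z] z xy by (intro exI) auto
  next
    show "continuous_on {x..y} (\<lambda>z. (C/al) * z powr al + f z)"
      by (rule continuous_on_add[OF continuous_on_mult[OF continuous_on_const cp] cf])
  qed
  ultimately have "\<bar>f y - f x\<bar> \<le> (C/al) * (y powr al - x powr al)" by (simp add: algebra_simps)
  also have "\<dots> \<le> (C/al) * (y - x) powr al"
  proof (rule mult_left_mono)
    show "y powr al - x powr al \<le> (y - x) powr al" by (rule powr_diff_le) (use xy al in auto)
    have "0 \<le> \<bar>f' (pi/2)\<bar>" by simp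
    also have "\<dots> \<le> C * (pi/2) powr (al - 1)" by (rule bd) auto
    finally have "0 \<le> C" by (simp add: zero_le_mult_iff)
    thus "0 \<le> C / al" using al by simp
  qed
  finally show ?thesis .
qed

lemma holder_periodic:
  fixes F :: "real \<Rightarrow> real"
  assumes per: "\<And>x. F (x + 2*pi) = F x"
    and loc: "\<And>x y. -pi \<le> x \<Longrightarrow> x \<le> pi \<Longrightarrow> -pi \<le> y \<Longrightarrow> y \<le> pi \<Longrightarrow> \<bar>F x - F y\<bar> \<le> K * \<bar>x - y\<bar> powr al"
    and bnd: "\<And>x. \<bar>F x\<bar> \<le> B"
    and al: "0 < al" "al \<le> 1"
  shows "holder al F"
proof -
  have K0: "0 \<le> K" using loc[of 0 1] by (smt (verit) pi_gt3 powr_gt_zero zero_le_mult_iff)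
  have main: "\<bar>F x - F y\<bar> \<le> (2*K + 2*B) * \<bar>x - y\<bar> powr al" if xy: "x \<le> y" for x y
  proof (cases "y - x \<ge> 1")
    case True
    hence "1 \<le> \<bar>x - y\<bar> powr al" using al ge_one_powr_ge_zero by auto
    moreover have B0: "0 \<le> 2*B" using bnd[of x] by linarith
    ultimately have "2*B * 1 \<le> 2*B * \<bar>x - y\<bar> powr al" by (intro mult_left_mono)
    hence "2*B \<le> 2*B * \<bar>x - y\<bar> powr al" by simp
    moreover have "\<bar>F x - F y\<bar> \<le> 2*B" using bnd[of x] bnd[of y] by auto
    moreover have "0 \<le> 2*K * \<bar>x - y\<bar> powr al" using K0 by simp
    ultimately show ?thesis by (simp add: algebra_simps)
  next
    case False
    obtain k where k: "-pi \<le> x - 2*pi * of_int k" "x - 2*pi * of_int k < pi" using reduce_ex by blast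
    define x' where "x' = x - 2*pi * of_int k"
    define y' where "y' = y - 2*pi * of_int k"
    have fx: "F x = F x'" using periodic_int[of F x' k, OF per] by (simp add: x'_def)
    have fy: "F y = F y'" using periodic_int[of F y' k, OF per] by (simp add: y'_def)
    have d: "\<bar>x - y\<bar> = \<bar>x' - y'\<bar>" by (simp add: x'_def y'_def)
    have xy': "x' \<le> y'" "y' - x' < 1" using xy False by (auto simp: x'_def y'_def)
    have "\<bar>F x' - F y'\<bar> \<le> 2 * K * \<bar>x' - y'\<bar> powr al"
    proof (cases "y' \<le> pi")
      case True
      have "\<bar>F x' - F y'\<bar> \<le> K * \<bar>x' - y'\<bar> powr al" by (rule loc) (use k x'_def xy' True in auto)
      also have "\<dots> \<le> 2 * K * \<bar>x' - y'\<bar> powr al" using K0 by simp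
      finally show ?thesis .
    next
      case yp: False
      have "F y' = F (y' - 2*pi)" using per[of "y' - 2*pi"] by simp
      have "\<bar>F x' - F y'\<bar> \<le> \<bar>F x' - F pi\<bar> + \<bar>F (-pi) - F (y' - 2*pi)\<bar>"
        using per[of "-pi"] per[of "y' - 2*pi"] by simp
      also have "\<dots> \<le> K * \<bar>x' - pi\<bar> powr al + K * \<bar>-pi - (y' - 2*pi)\<bar> powr al"
        using loc[of x' pi] loc[of "-pi" "y' - 2*pi"] k x'_def xy' yp pi_gt3 by (intro add_mono) auto
      also have "\<dots> \<le> K * \<bar>x' - y'\<bar> powr al + K * \<bar>x' - y'\<bar> powr al"
        using xy' yp k x'_def al K0 by (intro add_mono mult_left_mono powr_mono2) auto
      finally show ?thesis by simp
    qed
    also have "\<dots> \<le> (2*K + 2*B) * \<bar>x' - y'\<bar> powr al"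
      using bnd[of x] by (intro mult_right_mono) auto
    finally show ?thesis using fx fy d by simp
  qed
  show ?thesis unfolding holder_def
  proof (intro exI allI)
    fix x y :: real
    show "\<bar>F x - F y\<bar> \<le> (2*K + 2*B) * \<bar>x - y\<bar> powr al"
      using main[of x y] main[of y x] by (cases "x \<le> y") (auto simp: abs_minus_commute)
  qed
qed

lemma holder_oddext:
  fixes f :: "real \<Rightarrow> real"
  assumes f0: "f 0 = 0" and fpi: "f pi = 0"
    and loc: "\<And>x y. 0 \<le> x \<Longrightarrow> x \<le> y \<Longrightarrow> y \<le> pi \<Longrightarrow> \<bar>f y - f x\<bar> \<le> K * (y - x) powr al"
    and al: "0 < al" "al \<le> 1"
  shows "holder al (oddext f)"
proof -
  have K0: "0 \<le> K" using loc[of 0 1] by (smt (verit) pi_gt3 powr_gt_zero zero_le_mult_iff)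
  have loc': "\<bar>f y - f x\<bar> \<le> K * \<bar>y - x\<bar> powr al" if "0 \<le> x" "x \<le> pi" "0 \<le> y" "y \<le> pi" for x y
    using loc[of x y] loc[of y x] that by (cases "x \<le> y") (auto simp: abs_minus_commute)
  have fb: "\<bar>f z\<bar> \<le> K * pi powr al" if "0 \<le> z" "z \<le> pi" for z
  proof -
    have "\<bar>f z\<bar> \<le> K * (z - 0) powr al" using loc[of 0 z] that f0 by simp
    also have "\<dots> \<le> K * pi powr al" using that al K0 by (intro mult_left_mono powr_mono2) auto
    finally show ?thesis .
  qed
  show ?thesis
  proof (rule holder_periodic[of "oddext f" "2*K" al "K * pi powr al"])
    show "oddext f (x + 2*pi) = oddext f x" for x by (rule oddext_periodic)
    show "\<bar>oddext f x\<bar> \<le> K * pi powr al" for x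
      using fb[of "rr x"] rr_bounds[of x] unfolding oddext_def abs_mult sg_abs by simp
    show "0 < al" "al \<le> 1" by fact+
    fix x y assume xy: "-pi \<le> x" "x \<le> pi" "-pi \<le> y" "y \<le> pi"
    have ex: "oddext f x = (if 0 \<le> x then f x else - f (-x))" by (rule oddext_expl) (use fpi xy in auto)
    have ey: "oddext f y = (if 0 \<le> y then f y else - f (-y))" by (rule oddext_expl) (use fpi xy in auto)
    show "\<bar>oddext f x - oddext f y\<bar> \<le> 2*K * \<bar>x - y\<bar> powr al"
    proof (cases "0 \<le> x")
      case x0: True
      show ?thesis
      proof (cases "0 \<le> y")
        case True
        have "\<bar>f x - f y\<bar> \<le> K * \<bar>x - y\<bar> powr al" using loc'[of y x] x0 True xy by auto
        thus ?thesis using ex ey x0 True K0 by simp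
      next
        case False
        have "\<bar>f x + f (-y)\<bar> \<le> \<bar>f x - f 0\<bar> + \<bar>f (-y) - f 0\<bar>" using f0 by simp
        also have "\<dots> \<le> K * \<bar>x - 0\<bar> powr al + K * \<bar>-y - 0\<bar> powr al"
          using loc'[of 0 x] loc'[of 0 "-y"] x0 False xy by (intro add_mono) auto
        also have "\<dots> \<le> K * \<bar>x - y\<bar> powr al + K * \<bar>x - y\<bar> powr al"
          using x0 False al K0 by (intro add_mono mult_left_mono powr_mono2) auto
        finally show ?thesis using ex ey x0 False by simp
      qed
    next
      case x0: False
      show ?thesis
      proof (cases "0 \<le> y")
        case True
        have "\<bar>f (-x) + f y\<bar> \<le> \<bar>f (-x) - f 0\<bar> + \<bar>f y - f 0\<bar>" using f0 by simp
        also have "\<dots> \<le> K * \<bar>-x - 0\<bar> powr al + K * \<bar>y - 0\<bar> powr al"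
          using loc'[of 0 "-x"] loc'[of 0 y] x0 True xy by (intro add_mono) auto
        also have "\<dots> \<le> K * \<bar>x - y\<bar> powr al + K * \<bar>x - y\<bar> powr al"
          using x0 True al K0 by (intro add_mono mult_left_mono powr_mono2) auto
        finally show ?thesis using ex ey x0 True by (simp add: abs_minus_commute)
      next
        case False
        have "\<bar>f (-x) - f (-y)\<bar> \<le> K * \<bar>(-x) - (-y)\<bar> powr al" using loc'[of "-y" "-x"] x0 False xy by auto
        thus ?thesis using ex ey x0 False K0 by (simp add: abs_minus_commute)
      qed
    qed
  qed
qed



lemma antideriv_exists:
  fixes f :: "real \<Rightarrow> real"
  assumes c: "continuous_on UNIV f"
  shows "\<exists>F. \<forall>x. (F has_real_derivative f x) (at x)"
proof -
  define F where "F x = integral {0..x} f - integral {x..0} f" for x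
  have intg: "f integrable_on {a..b}" for a b
    by (rule integrable_continuous_real) (rule continuous_on_subset[OF c], auto)
  have eqF: "F y = integral {a..y} f - integral {a..0} f" if "a \<le> y" "a \<le> 0" for a y
  proof (cases "0 \<le> y")
    case True
    have "integral {a..0} f + integral {0..y} f = integral {a..y} f"
      using Henstock_Kurzweil_Integration.integral_combine[where f=f and a=a and c=0 and b=y] that True intg by auto
    moreover have "integral {y..0} f = 0"
    proof (cases "y = 0")
      case True thus ?thesis by simp
    next
      case False thus ?thesis using \<open>0 \<le> y\<close> by simp
    qed
    ultimately show ?thesis unfolding F_def by simp
  next
    case False
    have "integral {a..y} f + integral {y..0} f = integral {a..0} f"
      using Henstock_Kurzweil_Integration.integral_combine[where f=f and a=a and c=y and b=0] that False intg by auto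
    moreover have "integral {0..y} f = 0" using False by simp
    ultimately show ?thesis unfolding F_def by simp
  qed
  show ?thesis
  proof (intro exI allI)
    fix x :: real
    define a where "a = min 0 x - 1"
    define b where "b = x + 1"
    have "((\<lambda>y. integral {a..y} f) has_real_derivative f x) (at x within {a..b})"
      by (rule integral_has_real_derivative) (rule continuous_on_subset[OF c], auto simp: a_def b_def)
    hence "((\<lambda>y. integral {a..y} f) has_real_derivative f x) (at x)"
      using at_within_interior[of x "{a..b}"] by (auto simp: a_def b_def)
    hence "((\<lambda>y. integral {a..y} f - integral {a..0} f) has_real_derivative f x) (at x)"
      using DERIV_diff[OF _ DERIV_const] by fastforce
    thus "(F has_real_derivative f x) (at x)"
      by (rule has_field_derivative_transform_within_open[of _ _ _ "{a<..}"]) (use eqF[of a] in \<open>auto simp: a_def\<close>)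
  qed
qed

locale prof =
  fixes m :: real
  assumes m1: "1 < m"
begin

definition q :: "real \<Rightarrow> real \<Rightarrow> real" where "q a s = exp (a* s) / cosh (m* s)"

lemma q_pos: "0 < q a s" unfolding q_def by simp

lemma q_deriv: "(q a has_real_derivative q a s * (a - m * tanh (m* s))) (at s)"
  unfolding q_def[abs_def]
  by (auto intro!: derivative_eq_intros simp: tanh_def field_simps power2_eq_square)

lemma q_cont: "continuous_on UNIV (q a)"
  unfolding q_def[abs_def] by (intro continuous_intros) auto

lemma cosh_ge: "exp x / 2 \<le> cosh x" "exp (-x) / 2 \<le> cosh x" for x :: real
  unfolding cosh_field_def by auto

lemma q_le1: "q a s \<le> 2 * exp ((a - m) * s)"
proof -
  have "q a s \<le> exp (a* s) / (exp (m* s) / 2)"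
    unfolding q_def by (rule divide_left_mono) (use cosh_ge in auto)
  also have "\<dots> = 2 * exp ((a - m) * s)" by (simp add: left_diff_distrib exp_diff)
  finally show ?thesis .
qed

lemma q_le2: "q a s \<le> 2 * exp ((a + m) * s)"
proof -
  have "q a s \<le> exp (a* s) / (exp (-(m* s)) / 2)"
    unfolding q_def by (rule divide_left_mono) (use cosh_ge in auto)
  also have "\<dots> = 2 * exp ((a + m) * s)" by (simp add: distrib_right exp_add exp_minus field_simps)
  finally show ?thesis .
qed

lemma q_lim_top: assumes "a < m" shows "(q a \<longlongrightarrow> 0) at_top"
proof (rule tendsto_sandwich[of "\<lambda>_. 0" _ _ "\<lambda>s. 2 * exp ((a - m) * s)"])
  show "\<forall>\<^sub>F s in at_top. 0 \<le> q a s" using q_pos by (simp add: less_imp_le)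
  show "\<forall>\<^sub>F s in at_top. q a s \<le> 2 * exp ((a - m) * s)" using q_le1 by simp
  show "((\<lambda>_. 0::real) \<longlongrightarrow> 0) at_top" by simp
  have "filterlim (\<lambda>s. (a - m) * s) at_bot at_top"
    by (rule filterlim_tendsto_neg_mult_at_bot[OF tendsto_const]) (use assms in \<open>auto simp: filterlim_ident\<close>)
  hence "((\<lambda>s. exp ((a - m) * s)) \<longlongrightarrow> 0) at_top"
    by (rule filterlim_compose[OF exp_at_bot])
  thus "((\<lambda>s. 2 * exp ((a - m) * s)) \<longlongrightarrow> 0) at_top"
    using tendsto_mult_right_zero by blast
qed

lemma q_lim_bot: assumes "-m < a" shows "(q a \<longlongrightarrow> 0) at_bot"
proof (rule tendsto_sandwich[of "\<lambda>_. 0" _ _ "\<lambda>s. 2 * exp ((a + m) * s)"])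
  show "\<forall>\<^sub>F s in at_bot. 0 \<le> q a s" using q_pos by (simp add: less_imp_le)
  show "\<forall>\<^sub>F s in at_bot. q a s \<le> 2 * exp ((a + m) * s)" using q_le2 by simp
  show "((\<lambda>_. 0::real) \<longlongrightarrow> 0) at_bot" by simp
  have "filterlim (\<lambda>s. (a + m) * s) at_bot at_bot"
    by (rule filterlim_tendsto_pos_mult_at_bot[OF tendsto_const]) (use assms in \<open>auto simp: filterlim_ident\<close>)
  hence "((\<lambda>s. exp ((a + m) * s)) \<longlongrightarrow> 0) at_bot"
    by (rule filterlim_compose[OF exp_at_bot])
  thus "((\<lambda>s. 2 * exp ((a + m) * s)) \<longlongrightarrow> 0) at_bot"
    using tendsto_mult_right_zero by blast
qed

lemma th_lim_top: "((\<lambda>s. tanh (m* s)) \<longlongrightarrow> 1) at_top"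
proof -
  have "filterlim (\<lambda>s. m * s) at_top at_top"
    by (rule filterlim_tendsto_pos_mult_at_top[OF tendsto_const]) (use m1 in \<open>auto simp: filterlim_ident\<close>)
  thus ?thesis by (rule filterlim_compose[OF tanh_real_at_top])
qed

lemma th_lim_bot: "((\<lambda>s. tanh (m* s)) \<longlongrightarrow> -1) at_bot"
proof -
  have "filterlim (\<lambda>s. m * s) at_bot at_bot"
    by (rule filterlim_tendsto_pos_mult_at_bot[OF tendsto_const]) (use m1 in \<open>auto simp: filterlim_ident\<close>)
  thus ?thesis by (rule filterlim_compose[OF tanh_real_at_bot])
qed

lemma q_ident: "q 0 s ^ 2 = q 1 s * q (-1) s"
  unfolding q_def by (simp add: power2_eq_square exp_minus field_simps)

lemma th_ident: "1 - tanh (m* s) ^ 2 = q 1 s * q (-1) s"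
proof -
  have c: "cosh (m * s) ^ 2 \<noteq> 0" by simp
  have "1 - tanh (m * s) ^ 2 = (cosh (m * s) ^ 2 - sinh (m * s) ^ 2) / cosh (m * s) ^ 2"
    unfolding tanh_def power_divide using c by (simp add: diff_divide_distrib)
  also have "\<dots> = 1 / cosh (m * s) ^ 2"
  proof -
    have "cosh (m * s) ^ 2 - sinh (m * s) ^ 2 = 1" using cosh_square_eq[of "m * s"] by simp
    thus ?thesis by (simp only:)
  qed
  finally have "1 - tanh (m * s) ^ 2 = 1 / cosh (m * s) ^ 2" .
  thus ?thesis using q_ident[of s] unfolding q_def by (simp add: power2_eq_square)
qed

definition Z0 :: "real \<Rightarrow> real" where "Z0 = (SOME F. \<forall>x. (F has_real_derivative q 1 x) (at x))"

lemma Z0_deriv: "(Z0 has_real_derivative q 1 x) (at x)"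
proof -
  have "\<exists>F. \<forall>x. (F has_real_derivative q 1 x) (at x)" by (rule antideriv_exists[OF q_cont])
  hence "\<forall>x. (Z0 has_real_derivative q 1 x) (at x)" unfolding Z0_def by (rule someI_ex)
  thus ?thesis by blast
qed

lemma Z0_cont: "isCont Z0 x" using Z0_deriv DERIV_isCont by blast

lemma Z0_less: "s < t \<Longrightarrow> Z0 s < Z0 t"
  by (rule DERIV_pos_imp_increasing) (use Z0_deriv q_pos in blast)+

lemma Z0_le: "s \<le> t \<Longrightarrow> Z0 s \<le> Z0 t"
  using Z0_less[of s t] by (cases "s = t") auto

lemma Z0_key: "Z0 t - 2 * exp ((1 + m) * t) / (1 + m) \<le> Z0 s" if "s \<le> t" for s t
proof -
  have "Z0 t - 2 * exp ((1 + m) * t) / (1 + m) \<le> Z0 s - 2 * exp ((1 + m) * s) / (1 + m)"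
  proof (rule DERIV_nonpos_imp_nonincreasing[OF that])
    fix x
    have "((\<lambda>t. Z0 t - 2 * exp ((1 + m) * t) / (1 + m)) has_real_derivative q 1 x - 2 * exp ((1+m) * x)) (at x)"
      using m1 by (auto intro!: derivative_eq_intros Z0_deriv)
    thus "\<exists>y. ((\<lambda>t. Z0 t - 2 * exp ((1 + m) * t) / (1 + m)) has_real_derivative y) (at x) \<and> y \<le> 0"
      using q_le2[of 1 x] by auto
  qed
  also have "\<dots> \<le> Z0 s" using m1 by simp
  finally show ?thesis .
qed

lemma Z0_upper: "Z0 s \<le> Z0 0 + 2 / (m - 1)"
proof (cases "s \<le> 0")
  case True
  have h: "0 < 2 / (m - 1)" using m1 by simp
  from Z0_le[of s 0] True h show ?thesis by linarith
next
  case False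
  have "Z0 s + 2 * exp ((1 - m) * s) / (m - 1) \<le> Z0 0 + 2 * exp ((1 - m) * 0) / (m - 1)"
  proof (rule DERIV_nonpos_imp_nonincreasing[of 0 s])
    show "0 \<le> s" using False by simp
    fix x
    have e: "((\<lambda>t. exp ((1 - m) * t)) has_real_derivative exp ((1-m) * x) * (1-m)) (at x)"
      by (auto intro!: derivative_eq_intros)
    have e2: "((\<lambda>t. 2 / (m - 1) * exp ((1 - m) * t)) has_real_derivative 2 / (m - 1) * (exp ((1-m) * x) * (1-m))) (at x)"
      by (rule DERIV_cmult[OF e])
    have e3: "2 / (m - 1) * (exp ((1-m) * x) * (1-m)) = - 2 * exp ((1-m) * x)"
      using m1 by (simp add: field_simps)
    have "((\<lambda>t. Z0 t + 2 / (m - 1) * exp ((1 - m) * t)) has_real_derivative q 1 x + - 2 * exp ((1-m) * x)) (at x)"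
      using DERIV_add[OF Z0_deriv e2] unfolding e3 .
    hence "((\<lambda>t. Z0 t + 2 * exp ((1 - m) * t) / (m - 1)) has_real_derivative q 1 x - 2 * exp ((1-m) * x)) (at x)"
      by simp
    thus "\<exists>y. ((\<lambda>t. Z0 t + 2 * exp ((1 - m) * t) / (m - 1)) has_real_derivative y) (at x) \<and> y \<le> 0"
      using q_le1[of 1 x] by auto
  qed
  moreover have "0 \<le> 2 * exp ((1 - m) * s) / (m - 1)" using m1 by simp
  ultimately show ?thesis by simp
qed

lemma Z0_lower: "Z0 0 - 2 / (m + 1) \<le> Z0 s"
proof (cases "0 \<le> s")
  case True
  have h: "0 < 2 / (m + 1)" using m1 by simp
  from Z0_le[of 0 s] True h show ?thesis by linarith
next
  case False
  hence "Z0 0 - 2 * exp ((1 + m) * 0) / (1 + m) \<le> Z0 s" using Z0_key[of s 0] by simp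
  thus ?thesis by (simp add: add.commute)
qed

definition A :: real where "A = Inf (range Z0)"
definition B :: real where "B = Sup (range Z0)"

lemma bdd: "bdd_below (range Z0)" "bdd_above (range Z0)"
  using Z0_lower Z0_upper by (auto intro!: bdd_belowI bdd_aboveI)

lemma A_less: "A < Z0 s"
proof -
  have "A \<le> Z0 (s - 1)" unfolding A_def by (rule cInf_lower) (use bdd in auto)
  also have "\<dots> < Z0 s" by (rule Z0_less) simp
  finally show ?thesis .
qed

lemma B_gt: "Z0 s < B"
proof -
  have "Z0 s < Z0 (s + 1)" by (rule Z0_less) simp
  also have "\<dots> \<le> B" unfolding B_def by (rule cSup_upper) (use bdd in auto)
  finally show ?thesis .
qed

lemma AB: "A < B" using A_less[of 0] B_gt[of 0] by simp

lemma A_key: "Z0 t - A \<le> 2 * exp ((1 + m) * t) / (1 + m)"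
proof -
  have "Z0 t - 2 * exp ((1 + m) * t) / (1 + m) \<le> A"
    unfolding A_def
  proof (rule cInf_greatest)
    show "range Z0 \<noteq> {}" by simp
    fix y assume "y \<in> range Z0"
    then obtain s where y: "y = Z0 s" by auto
    show "Z0 t - 2 * exp ((1 + m) * t) / (1 + m) \<le> y"
    proof (cases "s \<le> t")
      case True thus ?thesis using Z0_key y by simp
    next
      case False
      hence "Z0 t \<le> Z0 s" using Z0_le by simp
      moreover have "0 \<le> 2 * exp ((1 + m) * t) / (1 + m)" using m1 by simp
      ultimately show ?thesis using y by simp
    qed
  qed
  thus ?thesis by simp
qed

definition lam :: real where "lam = pi / (B - A)"

lemma lam_pos: "0 < lam" unfolding lam_def using AB by simp

definition Zl :: "real \<Rightarrow> real" where "Zl s = lam * (Z0 s - A)"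

lemma Zl_deriv: "(Zl has_real_derivative lam * q 1 s) (at s)"
  unfolding Zl_def[abs_def] by (auto intro!: derivative_eq_intros Z0_deriv)

lemma Zl_cont: "isCont Zl s" using Zl_deriv DERIV_isCont by blast

lemma Zl_less: "s < t \<Longrightarrow> Zl s < Zl t"
  unfolding Zl_def using Z0_less lam_pos by simp

lemma Zl_less_iff: "Zl s < Zl t \<longleftrightarrow> s < t"
  using Zl_less[of s t] Zl_less[of t s] by (cases s t rule: linorder_cases) auto

lemma Zl_inj: "Zl s = Zl t \<longleftrightarrow> s = t"
  using Zl_less_iff by (metis less_irrefl linorder_neqE_linordered_idom)

lemma Zl_range: "0 < Zl s" "Zl s < pi"
proof -
  show "0 < Zl s" unfolding Zl_def using lam_pos A_less[of s] by simp
  have "Zl s < lam * (B - A)" unfolding Zl_def using lam_pos B_gt[of s] by simp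
  also have "\<dots> = pi" unfolding lam_def using AB by simp
  finally show "Zl s < pi" .
qed

lemma Zl_key: "Zl t \<le> lam * (2 / (1 + m)) * exp ((1 + m) * t)"
  unfolding Zl_def using mult_left_mono[OF A_key[of t], of lam] lam_pos by simp

lemma Zl_surj: assumes "0 < z" "z < pi" shows "\<exists>s. Zl s = z"
proof -
  define y where "y = A + z / lam"
  have yA: "A < y" using assms lam_pos unfolding y_def by simp
  have "z / lam = (B - A) * (z / pi)" unfolding lam_def by simp
  also have "\<dots> < (B - A) * 1" using assms AB by (intro mult_strict_left_mono) auto
  finally have "z / lam < B - A" by simp
  hence yB: "y < B" unfolding y_def by simp
  obtain s1 where s1: "Z0 s1 < y" using yA bdd unfolding A_def by (auto simp: cInf_less_iff)
  obtain s2 where s2: "y < Z0 s2" using yB bdd unfolding B_def by (auto simp: less_cSup_iff)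
  have "s1 \<le> s2" using s1 s2 Z0_le[of s2 s1] by (cases "s1 \<le> s2") auto
  then obtain s where "Z0 s = y"
    using IVT'[of Z0 s1 y s2] s1 s2 Z0_cont by (auto intro!: continuous_at_imp_continuous_on)
  hence "Zl s = z" unfolding Zl_def y_def using lam_pos by simp
  thus ?thesis by blast
qed

definition S :: "real \<Rightarrow> real" where "S z = (THE s. Zl s = z)"

lemma S_Zl: "S (Zl s) = s" unfolding S_def using Zl_inj by auto

lemma Zl_S: "0 < z \<Longrightarrow> z < pi \<Longrightarrow> Zl (S z) = z"
  using Zl_surj S_Zl by metis

lemma S_cont: assumes "0 < z" "z < pi" shows "isCont S z"
proof -
  have "isCont S (Zl (S z))"
    by (rule isCont_inverse_function[where d=1]) (auto simp: S_Zl Zl_cont)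
  thus ?thesis using Zl_S assms by simp
qed

lemma S_deriv: assumes "0 < z" "z < pi" shows "(S has_real_derivative inverse (lam * q 1 (S z))) (at z)"
  by (rule DERIV_inverse_function[where f=Zl and g=S and x=z and a=0 and b=pi]) 
     (use assms Zl_deriv Zl_S S_cont lam_pos q_pos[of 1 "S z"] in \<open>auto\<close>)

lemma S_bot: "filterlim S at_bot (at_right 0)"
  unfolding filterlim_at_bot
proof
  fix M
  show "\<forall>\<^sub>F z in at_right 0. S z \<le> M"
    unfolding eventually_at_right_field
  proof (intro exI[of _ "Zl M"] conjI allI impI)
    show "0 < Zl M" by (rule Zl_range)
    fix z assume z: "0 < z" "z < Zl M"
    hence "z < pi" using Zl_range[of M] by simp
    hence "Zl (S z) < Zl M" using z Zl_S by simp
    thus "S z \<le> M" using Zl_less_iff by simp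
  qed
qed

lemma S_top: "filterlim S at_top (at_left pi)"
  unfolding filterlim_at_top
proof
  fix M
  show "\<forall>\<^sub>F z in at_left pi. M \<le> S z"
    unfolding eventually_at_left_field
  proof (intro exI[of _ "Zl M"] conjI allI impI)
    show "Zl M < pi" by (rule Zl_range)
    fix z assume z: "Zl M < z" "z < pi"
    hence "0 < z" using Zl_range[of M] by simp
    hence "Zl M < Zl (S z)" using z Zl_S by simp
    thus "M \<le> S z" using Zl_less_iff by simp
  qed
qed

end



context prof begin

definition psib :: "real \<Rightarrow> real" where
  "psib z = (if 0 < z \<and> z < pi then lam * q 1 (S z) else 0)"
definition dpsib :: "real \<Rightarrow> real" where
  "dpsib z = (if 0 < z \<and> z < pi then 1 - m * tanh (m * S z) else if z \<le> 0 then 1 + m else 1 - m)"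
definition ub :: "real \<Rightarrow> real" where
  "ub z = (if 0 < z \<and> z < pi then m * q 0 (S z) else 0)"
definition omb :: "real \<Rightarrow> real" where
  "omb z = (if 0 < z \<and> z < pi then m^2 / lam * q (-1) (S z) else 0)"

definition gpsi :: "real \<Rightarrow> real" where "gpsi s = lam * q 1 s"
definition gdpsi :: "real \<Rightarrow> real" where "gdpsi s = 1 - m * tanh (m * s)"
definition gu :: "real \<Rightarrow> real" where "gu s = m * q 0 s"
definition gom :: "real \<Rightarrow> real" where "gom s = m^2 / lam * q (-1) s"

lemma g_eqs: "0 < y \<Longrightarrow> y < pi \<Longrightarrow> psib y = gpsi (S y) \<and> dpsib y = gdpsi (S y) \<and> ub y = gu (S y) \<and> omb y = gom (S y)"
  unfolding psib_def dpsib_def ub_def omb_def gpsi_def gdpsi_def gu_def gom_def by simp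

lemma g_ends: "psib 0 = 0" "psib pi = 0" "dpsib 0 = 1 + m" "dpsib pi = 1 - m"
  "ub 0 = 0" "ub pi = 0" "omb 0 = 0" "omb pi = 0"
proof -
  have p: "\<not> pi \<le> 0" using pi_gt_zero by linarith
  show "psib 0 = 0" "psib pi = 0" "dpsib 0 = 1 + m" "dpsib pi = 1 - m"
    "ub 0 = 0" "ub pi = 0" "omb 0 = 0" "omb pi = 0"
    unfolding psib_def dpsib_def ub_def omb_def using p by auto
qed

lemma gpsi_d: "(gpsi has_real_derivative lam * (q 1 s * (1 - m * tanh (m * s)))) (at s)"
  unfolding gpsi_def[abs_def] by (rule DERIV_cmult[OF q_deriv])
lemma gu_d: "(gu has_real_derivative m * (q 0 s * (0 - m * tanh (m * s)))) (at s)"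
  unfolding gu_def[abs_def] by (rule DERIV_cmult[OF q_deriv])
lemma gom_d: "(gom has_real_derivative m^2 / lam * (q (-1) s * (-1 - m * tanh (m * s)))) (at s)"
  unfolding gom_def[abs_def] by (rule DERIV_cmult[OF q_deriv])
lemma gdpsi_d: "(gdpsi has_real_derivative - (m * ((1 - tanh (m * s) ^ 2) * m))) (at s)"
  unfolding gdpsi_def[abs_def] by (auto intro!: derivative_eq_intros)

lemma comp_S_deriv:
  assumes z: "0 < z" "z < pi" and g: "(g has_real_derivative D) (at (S z))"
    and eq: "\<And>y. 0 < y \<Longrightarrow> y < pi \<Longrightarrow> f y = g (S y)"
  shows "(f has_real_derivative D * inverse (lam * q 1 (S z))) (at z)"
proof -
  have "((\<lambda>y. g (S y)) has_real_derivative D * inverse (lam * q 1 (S z))) (at z)"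
    by (rule DERIV_chain2[OF g S_deriv[OF z]])
  thus ?thesis
    by (rule has_field_derivative_transform_within_open[of _ _ _ "{0<..<pi}"]) (use z eq in auto)
qed

lemma base_cont:
  assumes d: "\<And>s. \<exists>D. (g has_real_derivative D) (at s)"
    and l0: "(g \<longlongrightarrow> f 0) at_bot" and lpi: "(g \<longlongrightarrow> f pi) at_top"
    and eq: "\<And>y. 0 < y \<Longrightarrow> y < pi \<Longrightarrow> f y = g (S y)"
  shows "continuous_on {0..pi} f"
proof (rule continuous_on_IccI)
  have ev0: "\<forall>\<^sub>F y in at_right 0. g (S y) = f y"
    unfolding eventually_at_right_field by (rule exI[of _ pi]) (use eq in auto)
  have "((\<lambda>y. g (S y)) \<longlongrightarrow> f 0) (at_right 0)" by (rule filterlim_compose[OF l0 S_bot])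
  thus "(f \<longlongrightarrow> f 0) (at_right 0)" using ev0 by (rule Lim_transform_eventually)
  have evp: "\<forall>\<^sub>F y in at_left pi. g (S y) = f y"
    unfolding eventually_at_left_field by (rule exI[of _ 0]) (use eq in auto)
  have "((\<lambda>y. g (S y)) \<longlongrightarrow> f pi) (at_left pi)" by (rule filterlim_compose[OF lpi S_top])
  thus "(f \<longlongrightarrow> f pi) (at_left pi)" using evp by (rule Lim_transform_eventually)
  show "0 < pi" by simp
  fix x :: real assume x: "0 < x" "x < pi"
  have gc: "isCont g (S x)" using d DERIV_isCont by blast
  have "isCont (\<lambda>y. g (S y)) x"
    using continuous_at_compose[OF S_cont[OF x] gc] by (simp add: o_def)
  moreover have "\<forall>\<^sub>F y in nhds x. f y = g (S y)"
    using eventually_nhds_in_open[of "{0<..<pi}" x] x by (auto elim!: eventually_mono simp: eq)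
  ultimately have "isCont f x" using isCont_cong[of f "\<lambda>y. g (S y)" x] by simp
  thus "f \<midarrow>x\<rightarrow> f x" by (simp add: isCont_def)
qed

lemma psib_cont: "continuous_on {0..pi} psib"
proof (rule base_cont[of gpsi])
  show "\<exists>D. (gpsi has_real_derivative D) (at s)" for s using gpsi_d by blast
  show "(gpsi \<longlongrightarrow> psib 0) at_bot" unfolding g_ends gpsi_def[abs_def]
    using tendsto_mult_right_zero[OF q_lim_bot[of 1]] m1 by auto
  show "(gpsi \<longlongrightarrow> psib pi) at_top" unfolding g_ends gpsi_def[abs_def]
    using tendsto_mult_right_zero[OF q_lim_top[of 1]] m1 by auto
qed (use g_eqs in auto)

lemma ub_cont: "continuous_on {0..pi} ub"
proof (rule base_cont[of gu])
  show "\<exists>D. (gu has_real_derivative D) (at s)" for s using gu_d by blast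
  show "(gu \<longlongrightarrow> ub 0) at_bot" unfolding g_ends gu_def[abs_def]
    using tendsto_mult_right_zero[OF q_lim_bot[of 0]] m1 by auto
  show "(gu \<longlongrightarrow> ub pi) at_top" unfolding g_ends gu_def[abs_def]
    using tendsto_mult_right_zero[OF q_lim_top[of 0]] m1 by auto
qed (use g_eqs in auto)

lemma omb_cont: "continuous_on {0..pi} omb"
proof (rule base_cont[of gom])
  show "\<exists>D. (gom has_real_derivative D) (at s)" for s using gom_d by blast
  show "(gom \<longlongrightarrow> omb 0) at_bot" unfolding g_ends gom_def[abs_def]
    using tendsto_mult_right_zero[OF q_lim_bot[of "-1"], of "m^2/lam"] m1 by auto
  show "(gom \<longlongrightarrow> omb pi) at_top" unfolding g_ends gom_def[abs_def]
    using tendsto_mult_right_zero[OF q_lim_top[of "-1"], of "m^2/lam"] m1 by auto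
qed (use g_eqs in auto)

lemma dpsib_cont: "continuous_on {0..pi} dpsib"
proof (rule base_cont[of gdpsi])
  show "\<exists>D. (gdpsi has_real_derivative D) (at s)" for s using gdpsi_d by blast
  show "(gdpsi \<longlongrightarrow> dpsib 0) at_bot" unfolding g_ends gdpsi_def[abs_def]
    using tendsto_diff[OF tendsto_const tendsto_mult[OF tendsto_const th_lim_bot], of 1 m] by simp
  show "(gdpsi \<longlongrightarrow> dpsib pi) at_top" unfolding g_ends gdpsi_def[abs_def]
    using tendsto_diff[OF tendsto_const tendsto_mult[OF tendsto_const th_lim_top], of 1 m] by simp
qed (use g_eqs in auto)

definition dub :: "real \<Rightarrow> real" where
  "dub z = m * (q 0 (S z) * (0 - m * tanh (m * S z))) * inverse (lam * q 1 (S z))"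
definition domb :: "real \<Rightarrow> real" where
  "domb z = m^2 / lam * (q (-1) (S z) * (-1 - m * tanh (m * S z))) * inverse (lam * q 1 (S z))"

lemma psib_deriv: "0 < z \<Longrightarrow> z < pi \<Longrightarrow> (psib has_real_derivative dpsib z) (at z)"
proof -
  assume z: "0 < z" "z < pi"
  have "(psib has_real_derivative lam * (q 1 (S z) * (1 - m * tanh (m * S z))) * inverse (lam * q 1 (S z))) (at z)"
    by (rule comp_S_deriv[OF z gpsi_d]) (use g_eqs in auto)
  moreover have "lam * (q 1 (S z) * (1 - m * tanh (m * S z))) * inverse (lam * q 1 (S z)) = dpsib z"
    using z lam_pos q_pos[of 1 "S z"] unfolding dpsib_def by (simp add: field_simps)
  ultimately show ?thesis by simp
qed

lemma dpsib_deriv: "0 < z \<Longrightarrow> z < pi \<Longrightarrow> (dpsib has_real_derivative - omb z) (at z)"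
proof -
  assume z: "0 < z" "z < pi"
  have "(dpsib has_real_derivative - (m * ((1 - tanh (m * S z) ^ 2) * m)) * inverse (lam * q 1 (S z))) (at z)"
    by (rule comp_S_deriv[OF z gdpsi_d]) (use g_eqs in auto)
  moreover have "- (m * ((1 - tanh (m * S z) ^ 2) * m)) * inverse (lam * q 1 (S z)) = - omb z"
    using z lam_pos q_pos[of 1 "S z"] unfolding omb_def th_ident by (simp add: field_simps power2_eq_square)
  ultimately show ?thesis by simp
qed

lemma ub_deriv: "0 < z \<Longrightarrow> z < pi \<Longrightarrow> (ub has_real_derivative dub z) (at z)"
  unfolding dub_def by (rule comp_S_deriv[OF _ _ gu_d]) (use g_eqs in auto)

lemma omb_deriv: "0 < z \<Longrightarrow> z < pi \<Longrightarrow> (omb has_real_derivative domb z) (at z)"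
  unfolding domb_def by (rule comp_S_deriv[OF _ _ gom_d]) (use g_eqs in auto)

definition H1b :: "real \<Rightarrow> real" where "H1b z = psib z * ub z"
definition h1 :: "real \<Rightarrow> real" where "h1 z = ub z * (2 * dpsib z - 1)"
definition H2b :: "real \<Rightarrow> real" where "H2b z = ub z ^ 2"
definition h2 :: "real \<Rightarrow> real" where "h2 z = omb z * (2 * dpsib z - 2)"

lemma H1b_deriv: assumes z: "0 < z" "z < pi" shows "(H1b has_real_derivative h1 z) (at z)"
proof -
  have "(H1b has_real_derivative dpsib z * ub z + dub z * psib z) (at z)"
    unfolding H1b_def[abs_def] by (rule DERIV_mult[OF psib_deriv[OF z] ub_deriv[OF z]])
  moreover have "dpsib z * ub z + dub z * psib z = h1 z"
    using z lam_pos q_pos[of 1 "S z"] unfolding h1_def dpsib_def ub_def psib_def dub_def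
    by (simp add: field_simps)
  ultimately show ?thesis by simp
qed

lemma H2b_deriv: assumes z: "0 < z" "z < pi" shows "(H2b has_real_derivative h2 z) (at z)"
proof -
  have "(H2b has_real_derivative dub z * ub z + dub z * ub z) (at z)"
    unfolding H2b_def[abs_def] power2_eq_square by (rule DERIV_mult[OF ub_deriv[OF z] ub_deriv[OF z]])
  moreover have "dub z * ub z + dub z * ub z = h2 z"
  proof -
    have qq: "q 0 (S z) * q 0 (S z) = q 1 (S z) * q (-1) (S z)" using q_ident[of "S z"] by (simp add: power2_eq_square)
    have "dub z * ub z + dub z * ub z = - 2 * m^3 * tanh (m * S z) * (q 0 (S z) * q 0 (S z)) / (lam * q 1 (S z))"
      using z lam_pos q_pos[of 1 "S z"] unfolding ub_def dub_def by (simp add: field_simps power3_eq_cube)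
    also have "\<dots> = h2 z"
      unfolding qq using z lam_pos q_pos[of 1 "S z"] unfolding h2_def omb_def dpsib_def
      by (simp add: field_simps power2_eq_square power3_eq_cube)
    finally show ?thesis .
  qed
  ultimately show ?thesis by simp
qed

lemma psi_om_ident: "psib z * omb z = ub z ^ 2"
proof (cases "0 < z \<and> z < pi")
  case True
  have "psib z * omb z = m^2 * (q 1 (S z) * q (-1) (S z))"
    using True lam_pos unfolding psib_def omb_def by (simp add: field_simps)
  also have "\<dots> = m^2 * q 0 (S z) ^ 2" by (simp add: q_ident)
  also have "\<dots> = ub z ^ 2" using True unfolding ub_def by (simp add: power_mult_distrib)
  finally show ?thesis .
next
  case False
  have "psib z = 0" "omb z = 0" "ub z = 0" using False unfolding psib_def omb_def ub_def by auto
  thus ?thesis by simp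
qed

lemma H1b_cont: "continuous_on {0..pi} H1b"
  unfolding H1b_def[abs_def] by (intro continuous_on_mult psib_cont ub_cont)
lemma h1_cont: "continuous_on {0..pi} h1"
  unfolding h1_def[abs_def] by (intro continuous_intros ub_cont dpsib_cont)
lemma H2b_cont: "continuous_on {0..pi} H2b"
  unfolding H2b_def[abs_def] by (intro continuous_intros ub_cont)
lemma h2_cont: "continuous_on {0..pi} h2"
  unfolding h2_def[abs_def] by (intro continuous_intros omb_cont dpsib_cont)
lemma h_ends: "h1 0 = 0" "h1 pi = 0" "h2 0 = 0" "h2 pi = 0"
  unfolding h1_def h2_def g_ends by simp_all
lemma om_ends': "(\<lambda>z. - omb z) 0 = 0" "(\<lambda>z. - omb z) pi = 0" using g_ends by simp_all
lemma nomb_cont: "continuous_on {0..pi} (\<lambda>z. - omb z)" by (intro continuous_intros omb_cont)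

end



context prof begin

definition KK :: real where "KK = lam * (2 / (1 + m))"
definition CE :: "real \<Rightarrow> real" where "CE al = 2 * pi powr (1 - al) + KK powr (1 - al)"

lemma KK_pos: "0 < KK" unfolding KK_def using lam_pos m1 by simp

lemma E_bound:
  assumes al: "0 < al" "al < 1" "2 \<le> (1 + m) * (1 - al)" and z: "0 < z" "z < pi"
  shows "1 + exp (-2 * S z) \<le> CE al * z powr (al - 1)"
proof -
  define s where "s = S z"
  have zs: "z = Zl s" using Zl_S z s_def by simp
  have p1: "1 \<le> pi powr (1 - al) * z powr (al - 1)"
  proof -
    have "pi powr (al - 1) \<le> z powr (al - 1)" by (rule powr_mono2') (use al z in auto)
    hence "pi powr (1 - al) * pi powr (al - 1) \<le> pi powr (1 - al) * z powr (al - 1)"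
      by (rule mult_left_mono) simp
    moreover have "pi powr (1 - al) * pi powr (al - 1) = 1" by (simp add: powr_add[symmetric])
    ultimately show ?thesis by simp
  qed
  have zp: "0 \<le> z powr (al - 1)" by simp
  have p2: "exp (-2 * s) \<le> (pi powr (1 - al) + KK powr (1 - al)) * z powr (al - 1)"
  proof (cases "0 \<le> s")
    case True
    have "exp (-2 * s) \<le> 1" using True by simp
    also have "\<dots> \<le> pi powr (1 - al) * z powr (al - 1)" by (rule p1)
    also have "\<dots> \<le> (pi powr (1 - al) + KK powr (1 - al)) * z powr (al - 1)"
      using zp by (simp add: distrib_right)
    finally show ?thesis .
  next
    case False
    have zk: "z \<le> KK * exp ((1 + m) * s)" unfolding zs KK_def using Zl_key[of s] by (simp add: mult.assoc)
    have "(KK * exp ((1 + m) * s)) powr (al - 1) \<le> z powr (al - 1)"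
      by (rule powr_mono2') (use al z zk in auto)
    moreover have "(KK * exp ((1 + m) * s)) powr (al - 1) = KK powr (al - 1) * exp ((1 + m) * s * (al - 1))"
      using KK_pos by (simp add: powr_mult exp_powr_real)
    ultimately have a: "KK powr (al - 1) * exp ((1 + m) * s * (al - 1)) \<le> z powr (al - 1)" by simp
    have "2 * (-s) \<le> ((1 + m) * (1 - al)) * (-s)" by (rule mult_right_mono) (use al False in auto)
    hence "-2 * s \<le> (1 + m) * s * (al - 1)" by (simp add: algebra_simps)
    hence "exp (-2 * s) \<le> exp ((1 + m) * s * (al - 1))" by simp
    also have "\<dots> = KK powr (1 - al) * (KK powr (al - 1) * exp ((1 + m) * s * (al - 1)))"
      using KK_pos by (simp add: powr_add[symmetric] mult.assoc[symmetric])
    also have "\<dots> \<le> KK powr (1 - al) * z powr (al - 1)" by (rule mult_left_mono[OF a]) simp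
    also have "\<dots> \<le> (pi powr (1 - al) + KK powr (1 - al)) * z powr (al - 1)"
      using zp by (simp add: distrib_right)
    finally show ?thesis .
  qed
  have "1 + exp (-2 * s) \<le> pi powr (1 - al) * z powr (al - 1) + (pi powr (1 - al) + KK powr (1 - al)) * z powr (al - 1)"
    using p1 p2 by simp
  also have "\<dots> = CE al * z powr (al - 1)" unfolding CE_def by (simp add: algebra_simps)
  finally show ?thesis unfolding s_def .
qed

lemma abs_tanh_le: "\<bar>tanh (x::real)\<bar> \<le> 1"
  using tanh_real_lt_1[of x] tanh_real_gt_neg1[of x] by auto

lemma q_ratio0: "q 0 s / q 1 s = exp (-s)"
  unfolding q_def by (simp add: exp_minus field_simps)
lemma q_ratio1: "q (-1) s / q 1 s = exp (-2 * s)"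
proof -
  have "q (-1) s / q 1 s = exp (-s) / exp s" unfolding q_def by (simp add: field_simps)
  also have "\<dots> = exp (-2 * s)" by (simp add: exp_diff[symmetric])
  finally show ?thesis .
qed

lemma exp_le_E: "exp (- s) \<le> 1 + exp (-2 * (s::real))"
proof (cases "0 \<le> s")
  case True
  have "exp (-s) \<le> exp 0" using True exp_le_cancel_iff[of "-s" 0] by linarith
  hence "exp (-s) \<le> 1" by simp
  thus ?thesis by (smt (verit) exp_gt_zero)
next
  case False
  have "exp (-s) \<le> exp (-2 * s)" using False by simp
  thus ?thesis by (smt (verit) exp_gt_zero)
qed

lemma dpsib_bd: "0 < z \<Longrightarrow> z < pi \<Longrightarrow> \<bar>dpsib z\<bar> \<le> (1 + m) * (1 + exp (-2 * S z))"
proof -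
  assume z: "0 < z" "z < pi"
  have "\<bar>1 - m * tanh (m * S z)\<bar> \<le> \<bar>1\<bar> + \<bar>m * tanh (m * S z)\<bar>" by (rule abs_triangle_ineq4)
  hence "\<bar>dpsib z\<bar> \<le> 1 + m * \<bar>tanh (m * S z)\<bar>" using z m1 unfolding dpsib_def by (simp add: abs_mult)
  also have "\<dots> \<le> 1 + m * 1" using abs_tanh_le m1 by (intro add_left_mono mult_left_mono) auto
  also have "\<dots> \<le> (1 + m) * 1" by simp
  also have "\<dots> \<le> (1 + m) * (1 + exp (-2 * S z))" using m1 by (intro mult_left_mono) auto
  finally show ?thesis .
qed

lemma dub_bd: "0 < z \<Longrightarrow> z < pi \<Longrightarrow> \<bar>dub z\<bar> \<le> (m^2 / lam) * (1 + exp (-2 * S z))"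
proof -
  assume z: "0 < z" "z < pi"
  define s where "s = S z"
  have "\<bar>dub z\<bar> = (m^2 / lam) * \<bar>tanh (m * s)\<bar> * (q 0 s / q 1 s)"
    unfolding dub_def s_def using m1 lam_pos q_pos[of 0 "S z"] q_pos[of 1 "S z"]
    by (simp add: abs_mult field_simps power2_eq_square)
  also have "\<dots> \<le> (m^2 / lam) * 1 * (q 0 s / q 1 s)"
    using abs_tanh_le lam_pos q_pos[of 0 s] q_pos[of 1 s] by (intro mult_right_mono mult_left_mono) auto
  also have "\<dots> = (m^2 / lam) * exp (-s)" by (simp add: q_ratio0)
  also have "\<dots> \<le> (m^2 / lam) * (1 + exp (-2 * s))" using lam_pos exp_le_E by (intro mult_left_mono) auto
  finally show ?thesis unfolding s_def .
qed

lemma domb_bd: "0 < z \<Longrightarrow> z < pi \<Longrightarrow> \<bar>domb z\<bar> \<le> (m^2 / lam * (1 + m) / lam) * (1 + exp (-2 * S z))"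
proof -
  assume z: "0 < z" "z < pi"
  define s where "s = S z"
  have "domb z = (m^2 / lam / lam) * (-1 - m * tanh (m * s)) * (q (-1) s / q 1 s)"
    unfolding domb_def s_def using m1 lam_pos q_pos[of "-1" "S z"] q_pos[of 1 "S z"]
    by (simp add: field_simps power2_eq_square)
  hence "\<bar>domb z\<bar> = (m^2 / lam / lam) * \<bar>-1 - m * tanh (m * s)\<bar> * (q (-1) s / q 1 s)"
    using lam_pos q_pos[of "-1" s] q_pos[of 1 s] by (simp add: abs_mult)
  also have "\<dots> \<le> (m^2 / lam / lam) * (1 + m) * (q (-1) s / q 1 s)"
  proof -
    have "\<bar>-1 - m * tanh (m * s)\<bar> \<le> \<bar>-1\<bar> + \<bar>m * tanh (m * s)\<bar>" by (rule abs_triangle_ineq4)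
    hence "\<bar>-1 - m * tanh (m * s)\<bar> \<le> 1 + m * \<bar>tanh (m * s)\<bar>" using m1 by (simp add: abs_mult)
    also have "\<dots> \<le> 1 + m" using abs_tanh_le[of "m * s"] m1 by (simp add: mult_left_le)
    finally show ?thesis
      using lam_pos q_pos[of "-1" s] q_pos[of 1 s] by (intro mult_right_mono mult_left_mono) auto
  qed
  also have "\<dots> = (m^2 / lam * (1 + m) / lam) * exp (-2 * s)" by (simp add: q_ratio1)
  also have "\<dots> \<le> (m^2 / lam * (1 + m) / lam) * (1 + exp (-2 * s))" using lam_pos m1 by (intro mult_left_mono) auto
  finally show ?thesis unfolding s_def .
qed

lemma base_holder:
  assumes al: "0 < al" "al < 1" "2 \<le> (1 + m) * (1 - al)"
    and c: "continuous_on {0..pi} f"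
    and d: "\<And>z. 0 < z \<Longrightarrow> z < pi \<Longrightarrow> (f has_real_derivative f' z) (at z)"
    and bd: "\<And>z. 0 < z \<Longrightarrow> z < pi \<Longrightarrow> \<bar>f' z\<bar> \<le> C * (1 + exp (-2 * S z))"
    and C: "0 \<le> C"
  shows "\<And>x y. 0 \<le> x \<Longrightarrow> x \<le> y \<Longrightarrow> y \<le> pi \<Longrightarrow> \<bar>f y - f x\<bar> \<le> (C * CE al / al) * (y - x) powr al"
proof -
  fix x y :: real assume xy: "0 \<le> x" "x \<le> y" "y \<le> pi"
  have "\<bar>f y - f x\<bar> \<le> ((C * CE al) / al) * (y - x) powr al"
  proof (rule holder_deriv_bound[OF c d])
    fix z :: real assume z: "0 < z" "z < pi"
    have "\<bar>f' z\<bar> \<le> C * (1 + exp (-2 * S z))" by (rule bd[OF z])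
    also have "\<dots> \<le> C * (CE al * z powr (al - 1))" by (rule mult_left_mono[OF E_bound[OF al z] C])
    finally show "\<bar>f' z\<bar> \<le> C * CE al * z powr (al - 1)" by (simp add: mult.assoc)
  qed (use al xy in auto)
  thus "\<bar>f y - f x\<bar> \<le> (C * CE al / al) * (y - x) powr al" by simp
qed

end



lemma ibp_zero:
  fixes H h \<phi> d\<phi> :: "real \<Rightarrow> real"
  assumes dH: "\<And>x. (H has_real_derivative h x) (at x)"
    and per: "H (2*pi) = H 0"
    and tf: "test_fun \<phi> d\<phi>"
  shows "((\<lambda>z. h z * \<phi> z + H z * d\<phi> z) has_integral 0) {0..2*pi}"
proof -
  have pphi: "\<phi> (2*pi) = \<phi> 0" using tf unfolding test_fun_def periodic2pi_def by (metis add_0)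
  have dphi: "\<And>x. (\<phi> has_real_derivative d\<phi> x) (at x)" using tf unfolding test_fun_def by blast
  have "((\<lambda>z. h z * \<phi> z + H z * d\<phi> z) has_integral (H (2*pi) * \<phi> (2*pi) - H 0 * \<phi> 0)) {0..2*pi}"
  proof (rule fundamental_theorem_of_calculus)
    show "0 \<le> 2*pi" by simp
    fix x assume "x \<in> {0..2*pi}"
    have "((\<lambda>z. H z * \<phi> z) has_real_derivative h x * \<phi> x + d\<phi> x * H x) (at x)"
      by (rule DERIV_mult[OF dH dphi])
    hence "((\<lambda>z. H z * \<phi> z) has_real_derivative h x * \<phi> x + H x * d\<phi> x) (at x within {0..2*pi})"
      by (simp add: mult.commute has_field_derivative_at_within)
    thus "((\<lambda>z. H z * \<phi> z) has_vector_derivative h x * \<phi> x + H x * d\<phi> x) (at x within {0..2*pi})"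
      by (simp add: has_real_derivative_iff_has_vector_derivative)
  qed
  thus ?thesis using per pphi by simp
qed

context prof begin

definition psi where "psi = oddext psib"
definition uu where "uu = oddext ub"
definition om where "om = oddext omb"
definition dpsi where "dpsi = evenext dpsib"

lemma psi_deriv: "(psi has_real_derivative dpsi x) (at x)"
  unfolding psi_def dpsi_def
  by (rule oddext_deriv[OF psib_cont g_ends(1,2) psib_deriv dpsib_cont])

lemma dpsi_deriv: "(dpsi has_real_derivative - om x) (at x)"
proof -
  have "(evenext dpsib has_real_derivative oddext (\<lambda>z. - omb z) x) (at x)"
    by (rule evenext_deriv[OF dpsib_cont dpsib_deriv nomb_cont om_ends'])
  moreover have "oddext (\<lambda>z. - omb z) x = - om x" unfolding om_def oddext_def by simp
  ultimately show ?thesis unfolding dpsi_def by simp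
qed

lemma H1_deriv: "(evenext H1b has_real_derivative oddext h1 x) (at x)"
  by (rule evenext_deriv[OF H1b_cont H1b_deriv h1_cont h_ends(1,2)])

lemma H2_deriv: "(evenext H2b has_real_derivative oddext h2 x) (at x)"
  by (rule evenext_deriv[OF H2b_cont H2b_deriv h2_cont h_ends(3,4)])

lemma idents:
  "psi z * uu z = evenext H1b z"
  "uu z ^ 2 = evenext H2b z"
  "oddext h1 z = uu z * (2 * dpsi z - 1)"
  "oddext h2 z = om z * (2 * dpsi z - 2)"
  "psi z * om z = uu z ^ 2"
proof -
  have s2: "sg z * sg z = 1" by (rule sg_sq)
  show "psi z * uu z = evenext H1b z" unfolding psi_def uu_def oddext_def evenext_def H1b_def
    using s2 by (metis mult.assoc mult.commute mult.left_neutral)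
  show "uu z ^ 2 = evenext H2b z" unfolding uu_def oddext_def evenext_def H2b_def power2_eq_square
    using s2 by (metis mult.assoc mult.commute mult.left_neutral)
  show "oddext h1 z = uu z * (2 * dpsi z - 1)" unfolding uu_def dpsi_def oddext_def evenext_def h1_def by simp
  show "oddext h2 z = om z * (2 * dpsi z - 2)" unfolding om_def dpsi_def oddext_def evenext_def h2_def by simp
  have "psi z * om z = sg z * sg z * (psib (rr z) * omb (rr z))" unfolding psi_def om_def oddext_def by simp
  also have "\<dots> = sg z * sg z * (ub (rr z))^2" by (simp add: psi_om_ident)
  also have "\<dots> = uu z ^ 2" unfolding uu_def oddext_def by (simp add: power2_eq_square)
  finally show "psi z * om z = uu z ^ 2" .
qed

lemma conts: "continuous_on UNIV psi" "continuous_on UNIV uu" "continuous_on UNIV om" "continuous_on UNIV dpsi"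
  unfolding psi_def uu_def om_def dpsi_def
  by (intro oddext_cont evenext_cont psib_cont ub_cont omb_cont dpsib_cont g_ends)+

lemma pers: "periodic2pi psi" "periodic2pi uu" "periodic2pi om"
  unfolding periodic2pi_def psi_def uu_def om_def by (simp_all add: oddext_periodic)

lemma odds: "odd_fun psi" "odd_fun uu" "odd_fun om"
  unfolding odd_fun_def psi_def uu_def om_def by (simp_all add: oddext_odd g_ends)

lemma om_nz: "om (pi/2) \<noteq> 0"
proof -
  have r: "rr (pi/2) = pi/2 \<and> sg (pi/2) = 1" by (rule rr_sg_nonneg) auto
  have "omb (pi/2) = m^2 / lam * q (-1) (S (pi/2))" unfolding omb_def by simp
  moreover have "m^2 / lam * q (-1) (S (pi/2)) > 0" using m1 lam_pos q_pos by simp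
  ultimately have "omb (pi/2) \<noteq> 0" by linarith
  moreover have r1: "rr (pi/2) = pi/2" using r by (rule conjunct1)
  moreover have r2: "sg (pi/2) = 1" using r by (rule conjunct2)
  ultimately show ?thesis unfolding om_def oddext_def r1 r2 by simp
qed

lemma holders:
  assumes al: "0 < al" "al < 1" "2 \<le> (1 + m) * (1 - al)"
  shows "holder al psi" "holder al uu" "holder al om"
proof -
  have C1: "0 \<le> 1 + m" using m1 by simp
  have C2: "0 \<le> m^2 / lam" using lam_pos by simp
  have C3: "0 \<le> m^2 / lam * (1 + m) / lam" using lam_pos m1 by simp
  show "holder al psi" unfolding psi_def
    by (rule holder_oddext[OF g_ends(1,2) base_holder[OF al psib_cont psib_deriv dpsib_bd C1]]) (use al in auto)
  show "holder al uu" unfolding uu_def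
    by (rule holder_oddext[OF g_ends(5,6) base_holder[OF al ub_cont ub_deriv dub_bd C2]]) (use al in auto)
  show "holder al om" unfolding om_def
    by (rule holder_oddext[OF g_ends(7,8) base_holder[OF al omb_cont omb_deriv domb_bd C3]]) (use al in auto)
qed

end



context prof begin

lemma phi_cont: "test_fun \<phi> d\<phi> \<Longrightarrow> continuous_on UNIV \<phi>"
  unfolding test_fun_def using DERIV_isCont continuous_at_imp_continuous_on by blast

lemma Ju:
  assumes tf: "test_fun \<phi> d\<phi>"
  shows "((\<lambda>z. 2 * psi z * uu z * d\<phi> z + 4 * uu z * dpsi z * \<phi> z) has_integral
            2 * integral {0..2*pi} (\<lambda>z. uu z * \<phi> z)) {0..2*pi}"
proof -
  have cphi: "continuous_on UNIV \<phi>" by (rule phi_cont[OF tf])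
  have i1: "((\<lambda>z. uu z * \<phi> z) has_integral integral {0..2*pi} (\<lambda>z. uu z * \<phi> z)) {0..2*pi}"
    by (rule integrable_integral, rule integrable_continuous_real)
       (intro continuous_on_mult continuous_on_subset[OF conts(2)] continuous_on_subset[OF cphi]; simp)
  have per: "evenext H1b (2*pi) = evenext H1b 0" using evenext_periodic[of H1b 0] by simp
  have i2: "((\<lambda>z. oddext h1 z * \<phi> z + evenext H1b z * d\<phi> z) has_integral 0) {0..2*pi}"
    by (rule ibp_zero[OF H1_deriv per tf])
  have "((\<lambda>z. 2 * (uu z * \<phi> z) + 2 * (oddext h1 z * \<phi> z + evenext H1b z * d\<phi> z)) has_integral
          2 * integral {0..2*pi} (\<lambda>z. uu z * \<phi> z) + 2 * 0) {0..2*pi}"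
    by (rule has_integral_add[OF has_integral_mult_right[OF i1] has_integral_mult_right[OF i2]])
  moreover have "2 * (uu z * \<phi> z) + 2 * (oddext h1 z * \<phi> z + evenext H1b z * d\<phi> z)
      = 2 * psi z * uu z * d\<phi> z + 4 * uu z * dpsi z * \<phi> z" for z
    unfolding idents(3) idents(1)[symmetric] by (simp add: algebra_simps)
  ultimately show ?thesis by simp
qed

lemma Jom:
  assumes tf: "test_fun \<phi> d\<phi>"
  shows "((\<lambda>z. 2 * psi z * om z * d\<phi> z + 2 * dpsi z * om z * \<phi> z - (uu z)\<^sup>2 * d\<phi> z) has_integral
            2 * integral {0..2*pi} (\<lambda>z. om z * \<phi> z)) {0..2*pi}"
proof -
  have cphi: "continuous_on UNIV \<phi>" by (rule phi_cont[OF tf])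
  have i1: "((\<lambda>z. om z * \<phi> z) has_integral integral {0..2*pi} (\<lambda>z. om z * \<phi> z)) {0..2*pi}"
    by (rule integrable_integral, rule integrable_continuous_real)
       (intro continuous_on_mult continuous_on_subset[OF conts(3)] continuous_on_subset[OF cphi]; simp)
  have per: "evenext H2b (2*pi) = evenext H2b 0" using evenext_periodic[of H2b 0] by simp
  have i2: "((\<lambda>z. oddext h2 z * \<phi> z + evenext H2b z * d\<phi> z) has_integral 0) {0..2*pi}"
    by (rule ibp_zero[OF H2_deriv per tf])
  have "((\<lambda>z. 2 * (om z * \<phi> z) + (oddext h2 z * \<phi> z + evenext H2b z * d\<phi> z)) has_integral
          2 * integral {0..2*pi} (\<lambda>z. om z * \<phi> z) + 0) {0..2*pi}"
    by (rule has_integral_add[OF has_integral_mult_right[OF i1] i2])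
  moreover have "2 * (om z * \<phi> z) + (oddext h2 z * \<phi> z + evenext H2b z * d\<phi> z)
      = 2 * psi z * om z * d\<phi> z + 2 * dpsi z * om z * \<phi> z - (uu z)\<^sup>2 * d\<phi> z" for z
  proof -
    have "2 * psi z * om z * d\<phi> z = 2 * (psi z * om z) * d\<phi> z" by (simp add: mult.assoc)
    also have "\<dots> = 2 * (uu z)\<^sup>2 * d\<phi> z" using idents(5)[of z] by metis
    finally have "2 * psi z * om z * d\<phi> z = 2 * (uu z)\<^sup>2 * d\<phi> z" .
    thus ?thesis unfolding idents(4) idents(2)[symmetric] by (simp only:) (simp add: algebra_simps)
  qed
  ultimately show ?thesis by simp
qed

lemma deriv_psi_scaled: "deriv (\<lambda>y. psi y / d) z = dpsi z / d"
  by (rule DERIV_imp_deriv) (rule DERIV_cdivide[OF psi_deriv])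

lemma weak_main:
  assumes c: "c = -2"
  shows "weak_sol_HL (- 1 / c) (\<lambda>z t. om z / (1 + c * t)) (\<lambda>z t. uu z / (1 + c * t)) (\<lambda>z t. psi z / (1 + c * t))"
  unfolding weak_sol_HL_def
proof (intro conjI ballI allI impI)
  fix t assume t: "t \<in> {0..<- 1 / c}"
  define d where "d = 1 + c * t"
  have d: "d \<noteq> 0" using t c unfolding d_def by auto
  show "continuous_on UNIV (\<lambda>z. uu z / (1 + c * t))" "continuous_on UNIV (\<lambda>z. om z / (1 + c * t))"
    using conts d[unfolded d_def] by (auto intro!: continuous_intros)
  show "periodic2pi (\<lambda>z. uu z / (1 + c * t))" "periodic2pi (\<lambda>z. om z / (1 + c * t))"
    "periodic2pi (\<lambda>z. psi z / (1 + c * t))"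
    using pers unfolding periodic2pi_def by auto
  show "odd_fun (\<lambda>z. uu z / (1 + c * t))" "odd_fun (\<lambda>z. om z / (1 + c * t))"
    "odd_fun (\<lambda>z. psi z / (1 + c * t))"
    using odds unfolding odd_fun_def by auto
  show "stream_fun (\<lambda>z. psi z / (1 + c * t)) (\<lambda>z. om z / (1 + c * t))"
    unfolding stream_fun_def d_def[symmetric]
  proof (intro conjI allI)
    fix z
    show "(\<lambda>z. psi z / d) differentiable at z"
      using DERIV_cdivide[OF psi_deriv[of z], where c=d] unfolding differentiable_def has_field_derivative_def by blast
    have e: "deriv (\<lambda>z. psi z / d) = (\<lambda>z. dpsi z / d)" using deriv_psi_scaled by auto
    show "(deriv (\<lambda>z. psi z / d) has_real_derivative - (om z / d)) (at z)"
      unfolding e using DERIV_cdivide[OF dpsi_deriv[of z], where c=d] by simp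
  qed
next
  fix \<phi> d\<phi> :: "real \<Rightarrow> real" assume tf: "test_fun \<phi> d\<phi>"
  define Iu where "Iu = integral {0..2*pi} (\<lambda>z. uu z * \<phi> z)"
  define Io where "Io = integral {0..2*pi} (\<lambda>z. om z * \<phi> z)"
  have eu: "integral {0..2*pi} (\<lambda>z. uu z / (1 + c * s) * \<phi> z) = Iu / (1 + c * s)" for s
  proof -
    have "(\<lambda>z. uu z / (1 + c * s) * \<phi> z) = (\<lambda>z. uu z * \<phi> z / (1 + c * s))" by auto
    thus ?thesis unfolding Iu_def by simp
  qed
  have eo: "integral {0..2*pi} (\<lambda>z. om z / (1 + c * s) * \<phi> z) = Io / (1 + c * s)" for s
  proof -
    have "(\<lambda>z. om z / (1 + c * s) * \<phi> z) = (\<lambda>z. om z * \<phi> z / (1 + c * s))" by auto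
    thus ?thesis unfolding Io_def by simp
  qed
  have nz: "1 + c * s \<noteq> 0" if "s \<in> {0..<- 1 / c}" for s using that c by auto
  show "continuous_on {0..<- 1 / c} (\<lambda>t. integral {0..2*pi} (\<lambda>z. uu z / (1 + c * t) * \<phi> z))"
    unfolding eu using nz by (auto intro!: continuous_intros)
  show "continuous_on {0..<- 1 / c} (\<lambda>t. integral {0..2*pi} (\<lambda>z. om z / (1 + c * t) * \<phi> z))"
    unfolding eo using nz by (auto intro!: continuous_intros)
  fix t assume t: "t \<in> {0<..<- 1 / c}"
  define d where "d = 1 + c * t"
  have d: "0 < d" using t c unfolding d_def by auto
  have dI: "((\<lambda>s. I / (1 + c * s)) has_real_derivative 2 * I / d^2) (at t)" for I
  proof -
    have "((\<lambda>s. I / (1 + c * s)) has_real_derivative - (I * (0 + c * 1)) / (1 + c * t)^2) (at t)"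
      using d unfolding d_def by (auto intro!: derivative_eq_intros simp: power2_eq_square)
    thus ?thesis unfolding d_def c by (simp add: mult.commute)
  qed
  show "((\<lambda>s. integral {0..2 * pi} (\<lambda>z. uu z / (1 + c * s) * \<phi> z)) has_real_derivative
          integral {0..2 * pi} (\<lambda>z. 2 * (psi z / (1 + c * t)) * (uu z / (1 + c * t)) * d\<phi> z +
            4 * (uu z / (1 + c * t)) * deriv (\<lambda>y. psi y / (1 + c * t)) z * \<phi> z)) (at t)"
  proof -
    have "((\<lambda>z. (1 / d^2) * (2 * psi z * uu z * d\<phi> z + 4 * uu z * dpsi z * \<phi> z)) has_integral
            (1 / d^2) * (2 * Iu)) {0..2*pi}"
      unfolding Iu_def by (rule has_integral_mult_right[OF Ju[OF tf]])
    moreover have "(1 / d^2) * (2 * psi z * uu z * d\<phi> z + 4 * uu z * dpsi z * \<phi> z)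
       = 2 * (psi z / d) * (uu z / d) * d\<phi> z + 4 * (uu z / d) * deriv (\<lambda>y. psi y / d) z * \<phi> z" for z
      unfolding deriv_psi_scaled using d by (simp add: field_simps power2_eq_square)
    ultimately have "integral {0..2*pi} (\<lambda>z. 2 * (psi z / d) * (uu z / d) * d\<phi> z + 4 * (uu z / d) * deriv (\<lambda>y. psi y / d) z * \<phi> z)
        = 2 * Iu / d^2"
      by (intro integral_unique) simp
    thus ?thesis unfolding eu d_def[symmetric] using dI[of Iu] by simp
  qed
  show "((\<lambda>s. integral {0..2 * pi} (\<lambda>z. om z / (1 + c * s) * \<phi> z)) has_real_derivative
          integral {0..2 * pi} (\<lambda>z. 2 * (psi z / (1 + c * t)) * (om z / (1 + c * t)) * d\<phi> z +
            2 * deriv (\<lambda>y. psi y / (1 + c * t)) z * (om z / (1 + c * t)) * \<phi> z -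
            (uu z / (1 + c * t))\<^sup>2 * d\<phi> z)) (at t)"
  proof -
    have "((\<lambda>z. (1 / d^2) * (2 * psi z * om z * d\<phi> z + 2 * dpsi z * om z * \<phi> z - (uu z)\<^sup>2 * d\<phi> z)) has_integral
            (1 / d^2) * (2 * Io)) {0..2*pi}"
      unfolding Io_def by (rule has_integral_mult_right[OF Jom[OF tf]])
    moreover have "(1 / d^2) * (2 * psi z * om z * d\<phi> z + 2 * dpsi z * om z * \<phi> z - (uu z)\<^sup>2 * d\<phi> z)
       = 2 * (psi z / d) * (om z / d) * d\<phi> z + 2 * deriv (\<lambda>y. psi y / d) z * (om z / d) * \<phi> z - (uu z / d)\<^sup>2 * d\<phi> z" for z
      unfolding deriv_psi_scaled using d by (simp add: field_simps power2_eq_square)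
    ultimately have "integral {0..2*pi} (\<lambda>z. 2 * (psi z / d) * (om z / d) * d\<phi> z + 2 * deriv (\<lambda>y. psi y / d) z * (om z / d) * \<phi> z - (uu z / d)\<^sup>2 * d\<phi> z)
        = 2 * Io / d^2"
      by (intro integral_unique) simp
    thus ?thesis unfolding eo d_def[symmetric] using dI[of Io] by simp
  qed
qed

end

theorem theorem2:
  shows "\<exists>\<delta>0::real. 0 < \<delta>0 \<and> \<delta>0 < 1 \<and>
    (\<forall>\<alpha>. 1 - \<delta>0 < \<alpha> \<and> \<alpha> < 1 \<longrightarrow>
      (\<exists>\<omega>inf uinf \<psi>inf :: real \<Rightarrow> real. \<exists>c::real.
         c < 0 \<and>
         holder \<alpha> \<omega>inf \<and> holder \<alpha> uinf \<and> holder \<alpha> \<psi>inf \<and>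
         periodic2pi \<omega>inf \<and> periodic2pi uinf \<and> periodic2pi \<psi>inf \<and>
         odd_fun \<omega>inf \<and> odd_fun uinf \<and> odd_fun \<psi>inf \<and>
         stream_fun \<psi>inf \<omega>inf \<and>
         (\<exists>z. \<omega>inf z \<noteq> 0) \<and>
         weak_sol_HL (- 1 / c)
           (\<lambda>z t. \<omega>inf z / (1 + c * t))
           (\<lambda>z t. uinf z / (1 + c * t))
           (\<lambda>z t. \<psi>inf z / (1 + c * t))))"
proof (intro exI[of _ "1/2"] conjI allI impI)
  show "(0::real) < 1/2" "(1/2::real) < 1" by simp_all
  fix al :: real assume al: "1 - 1/2 < al \<and> al < 1"
  define m where "m = 2 / (1 - al)"
  have m1: "1 < m" using al unfolding m_def by (simp add: field_simps)
  interpret P: prof m by unfold_locales (rule m1)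
  have e3: "(1 + m) * (1 - al) = 3 - al" unfolding m_def using al by (simp add: field_simps)
  have alc: "0 < al" "al < 1" "2 \<le> (1 + m) * (1 - al)"
    using al e3 by auto
  have sf: "stream_fun P.psi P.om"
    unfolding stream_fun_def
  proof (intro conjI allI)
    fix z
    show "P.psi differentiable at z"
      using P.psi_deriv[of z] unfolding differentiable_def has_field_derivative_def by blast
    have e: "deriv P.psi = P.dpsi" using P.psi_deriv DERIV_imp_deriv by blast
    show "(deriv P.psi has_real_derivative - P.om z) (at z)" unfolding e by (rule P.dpsi_deriv)
  qed
  show "\<exists>\<omega>inf uinf \<psi>inf :: real \<Rightarrow> real. \<exists>c::real.
         c < 0 \<and>
         holder al \<omega>inf \<and> holder al uinf \<and> holder al \<psi>inf \<and>
         periodic2pi \<omega>inf \<and> periodic2pi uinf \<and> periodic2pi \<psi>inf \<and>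
         odd_fun \<omega>inf \<and> odd_fun uinf \<and> odd_fun \<psi>inf \<and>
         stream_fun \<psi>inf \<omega>inf \<and>
         (\<exists>z. \<omega>inf z \<noteq> 0) \<and>
         weak_sol_HL (- 1 / c)
           (\<lambda>z t. \<omega>inf z / (1 + c * t))
           (\<lambda>z t. uinf z / (1 + c * t))
           (\<lambda>z t. \<psi>inf z / (1 + c * t))"
    using P.holders[OF alc] P.pers P.odds sf P.om_nz P.weak_main[of "-2"]
    by (intro exI[of _ P.om] exI[of _ P.uu] exI[of _ P.psi] exI[of _ "-2::real"]) auto
qed


end
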